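(* Let $0\le\underline{m}<m$ and $r\ge0$ be integers, $\epsilon\in(0,1/2)$, and $k=m-\underline{m}$. If $z'\in\{0,1\}^{\mathbb{F}_2^{\underline{m}}}$ has independent entries each equal to $1$ with probability $\epsilon$, then $$\mathbb{P}\big[P_e(\underline{m},m,r,\epsilon\mid z')\ge P_e(m,r,\epsilon)/2+1/4\big]\le\frac{2^{2-k}}{(1/2-P_e(m,r,\epsilon))^2}.$$
   Context: $RM(m,r)$ is the set of evaluation vectors $(f(x))_{x\in\mathbb{F}_2^m}$ of polynomials over $\mathbb{F}_2$ in $m$ variables of degree at most $r$. Draw $f$ uniformly from $RM(m,r)$, $Z\in\{0,1\}^{\mathbb{F}_2^m}$ with i.i.d. Bernoulli$(\epsilon)$ entries independent of $f$, and $\tilde f=f+Z$. $L_{m,r,\epsilon}(\tilde f)$ is the most likely value of $f(0^m)$ given $\tilde f(x)$ for all $x\ne0^m$ (uniformly random if tied), and $P_e(m,r,\epsilon)=\mathbb{P}(L_{m,r,\epsilon}(\tilde f)\ne f(0^m))$. Identify $\mathbb{F}_2^{\underline{m}}$ with $\mathbb{F}_2^{\underline{m}}\times\{0\}^{m-\underline{m}}\subseteq\mathbb{F}_2^m$; for $z'\in\{0,1\}^{\mathbb{F}_2^{\underline{m}}}$, $P_e(\underline{m},m,r,\epsilon\mid z')$ is the probability that $L_{m,r,\epsilon}(\tilde f)\ne f(0^m)$ conditioned on the restriction of $Z$ to $\mathbb{F}_2^{\underline{m}}\times\{0\}^{m-\underline{m}}$ being $z'$. *)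

theory Defs
  imports Complex_Main
begin

text \<open>Points of F_2^m are boolean lists of length m; word (evaluation vectors,
  noise vectors) are functions on boolean lists that vanish outside the cube.\<close>

definition pts :: "nat \<Rightarrow> bool list set" where
  "pts m = {xs. length xs = m}"

definition zero_pt :: "nat \<Rightarrow> bool list" where
  "zero_pt m = replicate m False"

definition words :: "nat \<Rightarrow> (bool list \<Rightarrow> bool) set" where
  "words m = {z. \<forall>x. x \<notin> pts m \<longrightarrow> \<not> z x}"

text \<open>Evaluation of the polynomial sum over S of c(S) prod_{i in S} x_i, S ranging
  over subsets of {0..<m} of size at most r (multilinear monomials of degree at most r).\<close>

definition rm_eval :: "nat \<Rightarrow> nat \<Rightarrow> (nat set \<Rightarrow> bool) \<Rightarrow> bool list \<Rightarrow> bool" where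
  "rm_eval m r c x =
     (x \<in> pts m \<and>
      odd (card {S. S \<subseteq> {0..<m} \<and> card S \<le> r \<and> c S \<and> (\<forall>i\<in>S. x ! i)}))"

definition RM :: "nat \<Rightarrow> nat \<Rightarrow> (bool list \<Rightarrow> bool) set" where
  "RM m r = {f. \<exists>c. f = rm_eval m r c}"

definition noise_w :: "nat \<Rightarrow> real \<Rightarrow> (bool list \<Rightarrow> bool) \<Rightarrow> real" where
  "noise_w m eps z = (\<Prod>x\<in>pts m. if z x then eps else 1 - eps)"

definition lik :: "nat \<Rightarrow> real \<Rightarrow> (bool list \<Rightarrow> bool) \<Rightarrow> (bool list \<Rightarrow> bool) \<Rightarrow> real" where
  "lik m eps f y = (\<Prod>x\<in>pts m - {zero_pt m}. if y x = f x then 1 - eps else eps)"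

text \<open>Unnormalised posterior weight (uniform prior on RM) of f(0) = b given y.\<close>

definition post :: "nat \<Rightarrow> nat \<Rightarrow> real \<Rightarrow> bool \<Rightarrow> (bool list \<Rightarrow> bool) \<Rightarrow> real" where
  "post m r eps b y = (\<Sum>f\<in>{f\<in>RM m r. f (zero_pt m) = b}. lik m eps f y)"

text \<open>Probability (over the uniform tie-break) that the MAP decoder L_{m,r,eps}
  applied to y outputs a value different from the bit b.\<close>

definition dec_err :: "nat \<Rightarrow> nat \<Rightarrow> real \<Rightarrow> bool \<Rightarrow> (bool list \<Rightarrow> bool) \<Rightarrow> real" where
  "dec_err m r eps b y =
     (if post m r eps (\<not> b) y > post m r eps b y then 1
      else if post m r eps (\<not> b) y = post m r eps b y then 1/2 else 0)"

text \<open>Joint probability that f = f0 is sent (uniformly from RM), Z = z, and the decoder errs.\<close>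

definition err_term :: "nat \<Rightarrow> nat \<Rightarrow> real \<Rightarrow> (bool list \<Rightarrow> bool) \<Rightarrow> (bool list \<Rightarrow> bool) \<Rightarrow> real" where
  "err_term m r eps f z =
     noise_w m eps z * dec_err m r eps (f (zero_pt m)) (\<lambda>x. f x \<noteq> z x) / real (card (RM m r))"

definition Pe :: "nat \<Rightarrow> nat \<Rightarrow> real \<Rightarrow> real" where
  "Pe m r eps = (\<Sum>f\<in>RM m r. \<Sum>z\<in>words m. err_term m r eps f z)"

definition restricts :: "nat \<Rightarrow> nat \<Rightarrow> (bool list \<Rightarrow> bool) \<Rightarrow> (bool list \<Rightarrow> bool) \<Rightarrow> bool" where
  "restricts mu m z z' = (\<forall>ys\<in>pts mu. z (ys @ replicate (m - mu) False) = z' ys)"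

definition Pe_cond :: "nat \<Rightarrow> nat \<Rightarrow> nat \<Rightarrow> real \<Rightarrow> (bool list \<Rightarrow> bool) \<Rightarrow> real" where
  "Pe_cond mu m r eps z' =
     (\<Sum>f\<in>RM m r. \<Sum>z\<in>{z\<in>words m. restricts mu m z z'}. err_term m r eps f z)
     / (\<Sum>z\<in>{z\<in>words m. restricts mu m z z'}. noise_w m eps z)"

end

theory Submission
  imports Defs
begin


definition wb :: "real \<Rightarrow> bool \<Rightarrow> real" where "wb e b = (if b then e else 1 - e)"
definition wd :: "'a set \<Rightarrow> ('a \<Rightarrow> bool) set" where "wd X = {z. \<forall>x. x \<notin> X \<longrightarrow> \<not> z x}"
definition wt :: "real \<Rightarrow> 'a set \<Rightarrow> ('a \<Rightarrow> bool) \<Rightarrow> real" where "wt e X z = (\<Prod>x\<in>X. wb e (z x))"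

lemma wd_insert: "n \<notin> X \<Longrightarrow> wd (insert n X) = (\<lambda>z. z(n:=False)) ` wd X \<union> (\<lambda>z. z(n:=True)) ` wd X"
proof (rule set_eqI, rule iffI)
  fix z assume n: "n \<notin> X" and z: "z \<in> wd (insert n X)"
  have z0: "z(n:=False) \<in> wd X" using z n by (auto simp: wd_def)
  show "z \<in> (\<lambda>z. z(n:=False)) ` wd X \<union> (\<lambda>z. z(n:=True)) ` wd X"
  proof (cases "z n")
    case True
    then have "z = (z(n:=False))(n:=True)" by (auto simp: fun_eq_iff)
    then show ?thesis using z0 by blast
  next
    case False
    then have "z = (z(n:=False))(n:=False)" by (auto simp: fun_eq_iff)
    then show ?thesis using z0 by blast
  qed
next
  fix z assume "n \<notin> X" "z \<in> (\<lambda>z. z(n:=False)) ` wd X \<union> (\<lambda>z. z(n:=True)) ` wd X"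
  then show "z \<in> wd (insert n X)" unfolding wd_def by auto
qed


lemma finite_wd: "finite X \<Longrightarrow> finite (wd X)"
proof -
  assume "finite X"
  have "wd X \<subseteq> (\<lambda>A x. x \<in> A) ` Pow X"
  proof
    fix z assume z: "z \<in> wd X"
    have "z = (\<lambda>x. x \<in> {x\<in>X. z x})" using z by (auto simp: wd_def fun_eq_iff)
    then show "z \<in> (\<lambda>A x. x \<in> A) ` Pow X" by blast
  qed
  then show ?thesis using \<open>finite X\<close> by (meson finite_Pow_iff finite_imageI finite_subset)
qed

lemma sum_wd_insert:
  assumes "finite X" "n \<notin> X"
  shows "(\<Sum>z\<in>wd (insert n X). h z) = (\<Sum>z\<in>wd X. h (z(n:=False)) + h (z(n:=True)))"
proof -
  have inj: "inj_on (\<lambda>z. z(n:=b)) (wd X)" for b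
  proof (rule inj_onI)
    fix x y assume xy: "x \<in> wd X" "y \<in> wd X" "x(n:=b) = y(n:=b)"
    show "x = y"
    proof
      fix a show "x a = y a"
      proof (cases "a = n")
        case True then show ?thesis using xy(1,2) assms(2) by (simp add: wd_def)
      next
        case False then show ?thesis using fun_cong[OF xy(3), of a] by simp
      qed
    qed
  qed
  have disj: "(\<lambda>z. z(n:=False)) ` wd X \<inter> (\<lambda>z. z(n:=True)) ` wd X = {}"
  proof (rule equals0I)
    fix z assume "z \<in> (\<lambda>z. z(n:=False)) ` wd X \<inter> (\<lambda>z. z(n:=True)) ` wd X"
    then have z1: "z \<in> (\<lambda>z. z(n:=False)) ` wd X" and z2: "z \<in> (\<lambda>z. z(n:=True)) ` wd X" by (rule IntD1, rule IntD2)
    from z1 obtain a where "z = a(n:=False)" by (rule imageE)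
    then have "z n = False" by simp
    moreover from z2 obtain b where "z = b(n:=True)" by (rule imageE)
    then have "z n = True" by simp
    ultimately show False by simp
  qed
  have fin: "finite (wd X)" using assms(1) by (rule finite_wd)
  have "(\<Sum>z\<in>wd (insert n X). h z) = (\<Sum>z\<in>(\<lambda>z. z(n:=False)) ` wd X. h z) + (\<Sum>z\<in>(\<lambda>z. z(n:=True)) ` wd X. h z)"
    unfolding wd_insert[OF assms(2)]
    by (rule sum.union_disjoint) (simp_all add: fin disj)
  also have "\<dots> = (\<Sum>z\<in>wd X. h (z(n:=False))) + (\<Sum>z\<in>wd X. h (z(n:=True)))"
    by (simp add: sum.reindex[OF inj])
  finally show ?thesis by (simp add: sum.distrib)
qed

lemma wt_upd_insert:
  assumes "finite X" "n \<notin> X"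
  shows "wt e (insert n X) (z(n:=b)) = wb e b * wt e X z"
proof -
  have "wt e X (z(n:=b)) = wt e X z" unfolding wt_def
    by (rule prod.cong) (use assms in auto)
  then show ?thesis using assms by (simp add: wt_def)
qed

lemma wt_pos: "0 < e \<Longrightarrow> e < 1 \<Longrightarrow> wt e X z > 0"
  unfolding wt_def wb_def by (rule prod_pos) auto

lemma wd_empty: "wd {} = {\<lambda>_. False}"
  by (auto simp: wd_def fun_eq_iff)

lemma wt_empty: "wt e {} z = 1" by (simp add: wt_def)


definition CE :: "real \<Rightarrow> 'a set \<Rightarrow> 'a set \<Rightarrow> (('a \<Rightarrow> bool) \<Rightarrow> real) \<Rightarrow> ('a \<Rightarrow> bool) \<Rightarrow> real" where
  "CE e X S f v = (\<Sum>z\<in>{z\<in>wd X. \<forall>x\<in>S. z x = v x}. wt e X z * f z)"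
definition Q :: "real \<Rightarrow> 'a set \<Rightarrow> 'a set \<Rightarrow> (('a \<Rightarrow> bool) \<Rightarrow> real) \<Rightarrow> real" where
  "Q e X S f = (\<Sum>v\<in>wd S. (CE e X S f v)^2 / wt e S v)"

lemma CE_insert:
  assumes "finite X" "n \<notin> X"
  shows "CE e (insert n X) S f v =
     (if n \<in> S \<and> v n then 0 else (1-e) * CE e X (S-{n}) (\<lambda>z. f (z(n:=False))) v)
   + (if n \<in> S \<and> \<not> v n then 0 else e * CE e X (S-{n}) (\<lambda>z. f (z(n:=True))) v)"
proof -
  have fin: "finite (wd X)" "finite (wd (insert n X))" using assms(1) by (auto intro: finite_wd)
  have agr: "(\<forall>x\<in>S. (z(n:=b)) x = v x) \<longleftrightarrow> (n \<in> S \<longrightarrow> b = v n) \<and> (\<forall>x\<in>S-{n}. z x = v x)" for z b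
    by (cases "n \<in> S") auto
  have "CE e (insert n X) S f v = (\<Sum>z\<in>wd (insert n X). if \<forall>x\<in>S. z x = v x then wt e (insert n X) z * f z else 0)"
    unfolding CE_def by (rule sum.inter_filter[OF fin(2)])
  also have "\<dots> = (\<Sum>z\<in>wd X. (if n \<in> S \<and> v n then 0 else (1-e) * (if \<forall>x\<in>S-{n}. z x = v x then wt e X z * f (z(n:=False)) else 0))
        + (if n \<in> S \<and> \<not> v n then 0 else e * (if \<forall>x\<in>S-{n}. z x = v x then wt e X z * f (z(n:=True)) else 0)))"
    unfolding sum_wd_insert[OF assms(1,2)]
  proof (rule sum.cong[OF refl])
    fix z assume "z \<in> wd X"
    show "(if \<forall>x\<in>S. (z(n := False)) x = v x then wt e (insert n X) (z(n := False)) * f (z(n := False)) else 0) +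
          (if \<forall>x\<in>S. (z(n := True)) x = v x then wt e (insert n X) (z(n := True)) * f (z(n := True)) else 0) =
          (if n \<in> S \<and> v n then 0 else (1-e) * (if \<forall>x\<in>S-{n}. z x = v x then wt e X z * f (z(n:=False)) else 0))
        + (if n \<in> S \<and> \<not> v n then 0 else e * (if \<forall>x\<in>S-{n}. z x = v x then wt e X z * f (z(n:=True)) else 0))"
      unfolding agr wt_upd_insert[OF assms(1,2)] wb_def by auto
  qed
  also have "\<dots> = (if n \<in> S \<and> v n then 0 else (1-e) * CE e X (S-{n}) (\<lambda>z. f (z(n:=False))) v)
   + (if n \<in> S \<and> \<not> v n then 0 else e * CE e X (S-{n}) (\<lambda>z. f (z(n:=True))) v)"
    unfolding CE_def sum.distrib
    by (simp add: sum.inter_filter[OF fin(1)] sum_distrib_left)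
  finally show ?thesis .
qed

lemma CE_lin: "CE e X S (\<lambda>z. a * f z + c * g z) v = a * CE e X S f v + c * CE e X S g v"
  unfolding CE_def by (simp add: sum.distrib sum_distrib_left algebra_simps)

lemma CE_v_cong: "(\<forall>x\<in>S. v x = v' x) \<Longrightarrow> CE e X S f v = CE e X S f v'"
  unfolding CE_def by (rule sum.cong) auto

lemma CE_f_cong: "(\<forall>z\<in>wd X. f z = g z) \<Longrightarrow> CE e X S f v = CE e X S g v"
  unfolding CE_def by (rule sum.cong) auto


lemma Q_insert_in:
  assumes "finite X" "n \<notin> X" "n \<in> S" "S \<subseteq> insert n X" "0 < e" "e < 1"
  shows "Q e (insert n X) S f = (1-e) * Q e X (S-{n}) (\<lambda>z. f (z(n:=False))) + e * Q e X (S-{n}) (\<lambda>z. f (z(n:=True)))"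
proof -
  define S' where "S' = S - {n}"
  have SS: "S = insert n S'" "n \<notin> S'" using assms(3) by (auto simp: S'_def)
  have S'eq: "S - {n} = S'" by (simp add: S'_def)
  have fS': "finite S'" using assms(1,4) S'_def finite_subset by auto
  have w0: "wt e S' v > 0" for v using wt_pos assms(5,6) by blast
  have e1: "1 - e \<noteq> 0" "e \<noteq> 0" using assms(5,6) by auto
  have "Q e (insert n X) S f = (\<Sum>v\<in>wd (insert n S'). (CE e (insert n X) S f v)^2 / wt e (insert n S') v)"
    unfolding Q_def SS(1) ..
  also have "\<dots> = (\<Sum>v\<in>wd S'. (CE e (insert n X) S f (v(n:=False)))^2 / wt e (insert n S') (v(n:=False))
     + (CE e (insert n X) S f (v(n:=True)))^2 / wt e (insert n S') (v(n:=True)))"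
    by (rule sum_wd_insert[OF fS' SS(2)])
  also have "\<dots> = (\<Sum>v\<in>wd S'. (1-e) * ((CE e X S' (\<lambda>z. f (z(n:=False))) v)^2 / wt e S' v)
     + e * ((CE e X S' (\<lambda>z. f (z(n:=True))) v)^2 / wt e S' v))"
  proof (rule sum.cong[OF refl])
    fix v assume "v \<in> wd S'"
    have c1: "CE e X S' g (v(n:=b)) = CE e X S' g v" for g b
      by (rule CE_v_cong) (use SS(2) in auto)
    have h1: "CE e (insert n X) S f (v(n:=False)) = (1-e) * CE e X S' (\<lambda>z. f (z(n:=False))) v"
      using CE_insert[OF assms(1,2), of e S f "v(n:=False)", unfolded S'eq] assms(3) c1 by simp
    have h2: "CE e (insert n X) S f (v(n:=True)) = e * CE e X S' (\<lambda>z. f (z(n:=True))) v"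
      using CE_insert[OF assms(1,2), of e S f "v(n:=True)", unfolded S'eq] assms(3) c1 by simp
    have h3: "wt e (insert n S') (v(n:=False)) = (1-e) * wt e S' v" "wt e (insert n S') (v(n:=True)) = e * wt e S' v"
      using wt_upd_insert[OF fS' SS(2)] by (simp_all add: wb_def)
    show "(CE e (insert n X) S f (v(n:=False)))^2 / wt e (insert n S') (v(n:=False))
     + (CE e (insert n X) S f (v(n:=True)))^2 / wt e (insert n S') (v(n:=True)) =
      (1-e) * ((CE e X S' (\<lambda>z. f (z(n:=False))) v)^2 / wt e S' v)
     + e * ((CE e X S' (\<lambda>z. f (z(n:=True))) v)^2 / wt e S' v)"
      unfolding h1 h2 h3 using e1 w0[of v] by (simp add: power2_eq_square field_simps)
  qed
  also have "\<dots> = (1-e) * Q e X S' (\<lambda>z. f (z(n:=False))) + e * Q e X S' (\<lambda>z. f (z(n:=True)))"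
    unfolding Q_def by (simp add: sum.distrib sum_distrib_left)
  finally show ?thesis unfolding S'_def .
qed

lemma Q_insert_out:
  assumes "finite X" "n \<notin> X" "n \<notin> S"
  shows "Q e (insert n X) S f = Q e X S (\<lambda>z. (1-e) * f (z(n:=False)) + e * f (z(n:=True)))"
proof -
  have "S - {n} = S" using assms(3) by auto
  then have "CE e (insert n X) S f v = CE e X S (\<lambda>z. (1-e) * f (z(n:=False)) + e * f (z(n:=True))) v" for v
    using CE_insert[OF assms(1,2), of e S f v] assms(3) by (simp add: CE_lin)
  then show ?thesis unfolding Q_def by simp
qed

lemma Q_mix:
  "(1-e) * Q e X S f0 + e * Q e X S f1 =
   Q e X S (\<lambda>z. (1-e) * f0 z + e * f1 z) + e * (1-e) * Q e X S (\<lambda>z. 1 * f1 z + (-1) * f0 z)"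
proof -
  have num: "(1-e)*a^2 + e*b^2 = ((1-e)*a+e*b)^2 + e*(1-e)*(1*b+(-1)*a)^2" for a b :: real
    by (simp add: power2_eq_square algebra_simps)
  have "(1-e) * ((CE e X S f0 v)^2 / t) + e * ((CE e X S f1 v)^2 / t) =
     (CE e X S (\<lambda>z. (1-e) * f0 z + e * f1 z) v)^2 / t + e * (1-e) * ((CE e X S (\<lambda>z. 1 * f1 z + (-1) * f0 z) v)^2 / t)" for v t
  proof -
    have "(1-e) * ((CE e X S f0 v)^2 / t) + e * ((CE e X S f1 v)^2 / t) = ((1-e) * (CE e X S f0 v)^2 + e * (CE e X S f1 v)^2) / t"
      by (simp add: add_divide_distrib)
    also have "\<dots> = (((1-e) * CE e X S f0 v + e * CE e X S f1 v)^2 + e*(1-e)*(1 * CE e X S f1 v + (-1) * CE e X S f0 v)^2) / t"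
      by (simp only: num)
    also have "\<dots> = (CE e X S (\<lambda>z. (1-e) * f0 z + e * f1 z) v)^2 / t + e * (1-e) * ((CE e X S (\<lambda>z. 1 * f1 z + (-1) * f0 z) v)^2 / t)"
      unfolding CE_lin by (simp add: add_divide_distrib)
    finally show ?thesis .
  qed
  then show ?thesis unfolding Q_def by (simp add: sum_distrib_left sum.distrib[symmetric])
qed

lemma Q_nonneg: "0 < e \<Longrightarrow> e < 1 \<Longrightarrow> Q e X S f \<ge> 0"
  unfolding Q_def by (intro sum_nonneg divide_nonneg_pos) (auto intro: wt_pos)

lemma CE_X:
  assumes "v \<in> wd X"
  shows "CE e X X f v = wt e X v * f v"
proof -
  have "{z\<in>wd X. \<forall>x\<in>X. z x = v x} = {v}"
  proof
    show "{z\<in>wd X. \<forall>x\<in>X. z x = v x} \<subseteq> {v}"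
    proof
      fix z assume z: "z \<in> {z\<in>wd X. \<forall>x\<in>X. z x = v x}"
      have "z x = v x" for x
      proof (cases "x \<in> X")
        case True then show ?thesis using z by blast
      next
        case False then show ?thesis using z assms by (simp add: wd_def)
      qed
      then show "z \<in> {v}" by (simp add: fun_eq_iff)
    qed
  qed (use assms in auto)
  then show ?thesis unfolding CE_def by simp
qed

lemma Q_X: "0 < e \<Longrightarrow> e < 1 \<Longrightarrow> Q e X X f = (\<Sum>z\<in>wd X. wt e X z * (f z)^2)"
  unfolding Q_def
proof (rule sum.cong[OF refl])
  fix v assume "0 < e" "e < 1" "v \<in> wd X"
  then show "(CE e X X f v)^2 / wt e X v = wt e X v * (f v)^2"
    using wt_pos[of e X v] by (simp add: CE_X power2_eq_square)
qed

lemma Q_empty: "Q e X {} f = (\<Sum>z\<in>wd X. wt e X z * f z)^2"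
  unfolding Q_def CE_def wd_empty wt_empty by simp

lemma sum_wt: "finite X \<Longrightarrow> (\<Sum>z\<in>wd X. wt e X z) = 1"
proof (induction X rule: finite_induct)
  case empty then show ?case by (simp add: wd_empty wt_empty)
next
  case (insert n X)
  then show ?case unfolding sum_wd_insert[OF insert(1,2)] wt_upd_insert[OF insert(1,2)]
    by (simp add: wb_def sum.distrib[symmetric] algebra_simps)
qed


lemma Q_insert_decomp:
  assumes "finite X" "n \<notin> X" "S \<subseteq> insert n X" "0 < e" "e < 1"
  shows "Q e (insert n X) S f = Q e X (S - {n}) (\<lambda>z. (1-e) * f (z(n:=False)) + e * f (z(n:=True)))
     + (if n \<in> S then e * (1-e) * Q e X (S - {n}) (\<lambda>z. 1 * f (z(n:=True)) + (-1) * f (z(n:=False))) else 0)"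
proof (cases "n \<in> S")
  case True
  show ?thesis using Q_insert_in[OF assms(1,2) True assms(3-5)] Q_mix True by simp
next
  case False
  then have "S - {n} = S" by auto
  then show ?thesis using Q_insert_out[OF assms(1,2) False] False by simp
qed

lemma Q_le_X:
  assumes "finite X" "S \<subseteq> X" "0 < e" "e < 1"
  shows "Q e X S f \<le> Q e X X f"
  using assms(1,2)
proof (induction X arbitrary: S f rule: finite_induct)
  case empty then show ?case by simp
next
  case (insert n X)
  define g where "g = (\<lambda>z. (1-e) * f (z(n:=False)) + e * f (z(n:=True)))"
  define D where "D = (\<lambda>z. 1 * f (z(n:=True)) + (-1) * f (z(n:=False)))"
  have top: "Q e (insert n X) (insert n X) f = Q e X X g + e * (1-e) * Q e X X D"
    using Q_insert_decomp[OF insert(1,2) subset_refl assms(3,4), of f] insert(2)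
    unfolding g_def D_def by simp
  have S: "Q e (insert n X) S f = Q e X (S - {n}) g + (if n \<in> S then e * (1-e) * Q e X (S - {n}) D else 0)"
    using Q_insert_decomp[OF insert(1,2) insert(4) assms(3,4), of f] unfolding g_def D_def by simp
  have sub: "S - {n} \<subseteq> X" using insert(4) by auto
  have "Q e X (S - {n}) g \<le> Q e X X g" "Q e X (S - {n}) D \<le> Q e X X D"
    using insert(3)[OF sub] by auto
  moreover have "Q e X X D \<ge> 0" using Q_nonneg assms(3,4) by blast
  moreover have "e * (1-e) \<ge> 0" using assms(3,4) by simp
  moreover have "e * (1-e) \<ge> 0" using assms(3,4) by simp
  ultimately have a: "Q e X (S - {n}) g \<le> Q e X X g" "Q e X (S - {n}) D \<le> Q e X X D"
     "0 \<le> e * (1-e) * Q e X X D" "e * (1-e) * Q e X (S - {n}) D \<le> e * (1-e) * Q e X X D"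
    by (auto intro: mult_left_mono)
  show ?case
  proof (cases "n \<in> S")
    case True
    then show ?thesis unfolding S top using a by simp
  next
    case False
    then show ?thesis unfolding S top using a by simp
  qed
qed

lemma CE_zero: "CE e X S (\<lambda>z. 0) v = 0" unfolding CE_def by simp

lemma Q_zero_fun: "(\<forall>z. f z = 0) \<Longrightarrow> Q e X S f = 0"
proof -
  assume "\<forall>z. f z = 0"
  then have "f = (\<lambda>z. 0)" by auto
  then show ?thesis unfolding Q_def by (simp add: CE_zero)
qed

lemma Q_family:
  fixes S :: "'j \<Rightarrow> 'a set" and J :: "'j set"
  assumes "finite X" "finite J" "\<forall>j\<in>J. S j \<subseteq> X" "0 < e" "e < 1" "c \<ge> 0"
    "\<forall>x\<in>X. real (card {j\<in>J. x \<in> S j}) \<le> c \<or> (\<forall>z. f (z(x:=True)) = f (z(x:=False)))"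
  shows "(\<Sum>j\<in>J. Q e X (S j) f - Q e X {} f) \<le> c * (Q e X X f - Q e X {} f)"
  using assms(1,3,7)
proof (induction X arbitrary: S f rule: finite_induct)
  case empty
  then have "S j = {}" if "j \<in> J" for j using that by auto
  then show ?case by simp
next
  case (insert n X)
  define g where "g = (\<lambda>z. (1-e) * f (z(n:=False)) + e * f (z(n:=True)))"
  define D where "D = (\<lambda>z. 1 * f (z(n:=True)) + (-1) * f (z(n:=False)))"
  define S' where "S' = (\<lambda>j. S j - {n})"
  have top: "Q e (insert n X) (insert n X) f = Q e X X g + e * (1-e) * Q e X X D"
    using Q_insert_decomp[OF insert(1,2) subset_refl assms(4,5), of f] insert(2)
    unfolding g_def D_def by simp
  have emp: "Q e (insert n X) {} f = Q e X {} g"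
    using Q_insert_decomp[OF insert(1,2) empty_subsetI assms(4,5), of f] unfolding g_def by simp
  have Sj: "Q e (insert n X) (S j) f = Q e X (S' j) g + (if n \<in> S j then e * (1-e) * Q e X (S' j) D else 0)"
    if "j \<in> J" for j
    using Q_insert_decomp[OF insert(1,2) _ assms(4,5), of "S j" f] insert(4) that
    unfolding g_def D_def S'_def by simp
  have IHc: "\<forall>x\<in>X. real (card {j\<in>J. x \<in> S' j}) \<le> c \<or> (\<forall>z. g (z(x:=True)) = g (z(x:=False)))"
  proof
    fix x assume x: "x \<in> X"
    then have xn: "x \<noteq> n" using insert(2) by auto
    have cj: "{j\<in>J. x \<in> S' j} = {j\<in>J. x \<in> S j}" using xn by (auto simp: S'_def)
    show "real (card {j\<in>J. x \<in> S' j}) \<le> c \<or> (\<forall>z. g (z(x:=True)) = g (z(x:=False)))"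
    proof (cases "real (card {j\<in>J. x \<in> S j}) \<le> c")
      case True then show ?thesis using cj by simp
    next
      case False
      have "real (card {j\<in>J. x \<in> S j}) \<le> c \<or> (\<forall>z. f (z(x:=True)) = f (z(x:=False)))"
        using bspec[OF insert(5) insertI2[OF x]] .
      then have indep: "\<forall>z. f (z(x:=True)) = f (z(x:=False))" using False by blast
      have "g (z(x:=True)) = g (z(x:=False))" for z
      proof -
        have "f ((z(x:=b))(n:=b')) = f ((z(n:=b'))(x:=b))" for b b'
          using xn by (simp add: fun_upd_twist)
        then show ?thesis unfolding g_def using indep by metis
      qed
      then show ?thesis by blast
    qed
  qed
  have IH: "(\<Sum>j\<in>J. Q e X (S' j) g - Q e X {} g) \<le> c * (Q e X X g - Q e X {} g)"
  proof -
    have sub': "\<forall>j\<in>J. S' j \<subseteq> X" using insert(4) by (auto simp: S'_def)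
    show ?thesis by (rule insert(3)[OF sub' IHc])
  qed
  have sec: "(\<Sum>j\<in>J. (if n \<in> S j then e * (1-e) * Q e X (S' j) D else 0)) \<le> c * (e * (1-e) * Q e X X D)"
  proof (cases "real (card {j\<in>J. n \<in> S j}) \<le> c")
    case True
    have "(\<Sum>j\<in>J. (if n \<in> S j then e * (1-e) * Q e X (S' j) D else 0)) \<le> (\<Sum>j\<in>J. (if n \<in> S j then e * (1-e) * Q e X X D else 0))"
    proof (rule sum_mono)
      fix j assume "j \<in> J"
      have "S' j \<subseteq> X" using insert(4) \<open>j \<in> J\<close> by (auto simp: S'_def)
      then have "Q e X (S' j) D \<le> Q e X X D" using Q_le_X insert(1) assms(4,5) by blast
      moreover have "e * (1-e) \<ge> 0" using assms(4,5) by simp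
      ultimately show "(if n \<in> S j then e * (1-e) * Q e X (S' j) D else 0) \<le> (if n \<in> S j then e * (1-e) * Q e X X D else 0)"
        by (simp add: mult_left_mono)
    qed
    also have "\<dots> = real (card {j\<in>J. n \<in> S j}) * (e * (1-e) * Q e X X D)"
      using sum.inter_filter[OF assms(2), of "\<lambda>j. e * (1-e) * Q e X X D" "\<lambda>j. n \<in> S j", symmetric] by simp
    also have "\<dots> \<le> c * (e * (1-e) * Q e X X D)"
    proof (rule mult_right_mono[OF True])
      show "0 \<le> e * (1 - e) * Q e X X D"
        using Q_nonneg[OF assms(4,5), of X X D] assms(4,5) by simp
    qed
    finally show ?thesis .
  next
    case False
    have "real (card {j\<in>J. n \<in> S j}) \<le> c \<or> (\<forall>z. f (z(n:=True)) = f (z(n:=False)))"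
        using bspec[OF insert(5) insertI1] .
    then have indep: "\<forall>z. f (z(n:=True)) = f (z(n:=False))" using False by blast
    then have z0: "Q e X T D = 0" for T by (intro Q_zero_fun) (simp add: D_def)
    have "(\<Sum>j\<in>J. (if n \<in> S j then e * (1-e) * Q e X (S' j) D else 0)) = 0"
      by (rule sum.neutral) (simp add: z0)
    then show ?thesis by (simp add: z0)
  qed
  have "(\<Sum>j\<in>J. Q e (insert n X) (S j) f - Q e (insert n X) {} f)
     = (\<Sum>j\<in>J. Q e X (S' j) g - Q e X {} g) + (\<Sum>j\<in>J. (if n \<in> S j then e * (1-e) * Q e X (S' j) D else 0))"
    unfolding sum.distrib[symmetric] by (rule sum.cong[OF refl]) (simp add: Sj emp)
  also have "\<dots> \<le> c * (Q e X X g - Q e X {} g) + c * (e * (1-e) * Q e X X D)"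
    using IH sec by (rule add_mono)
  also have "\<dots> = c * (Q e (insert n X) (insert n X) f - Q e (insert n X) {} f)"
    unfolding top emp by (simp add: algebra_simps)
  finally show ?case .
qed


lemma wt_comp:
  assumes "\<forall>x. A (A x) = x"
  shows "wt e (A ` T) (u \<circ> A) = wt e T u"
proof -
  have inj: "inj_on A T" by (metis assms inj_onI)
  show ?thesis unfolding wt_def by (simp add: prod.reindex[OF inj] assms)
qed

lemma comp_invol: "\<forall>x. A (A x) = x \<Longrightarrow> (z \<circ> A) \<circ> A = z"
  by (simp add: fun_eq_iff)

lemma wd_comp:
  assumes "\<forall>x. A (A x) = x" "u \<in> wd T"
  shows "u \<circ> A \<in> wd (A ` T)"
  unfolding wd_def
proof (intro CollectI allI impI)
  fix x assume "x \<notin> A ` T"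
  then have "A x \<notin> T" using assms(1) by (metis imageI)
  then show "\<not> (u \<circ> A) x" using assms(2) by (simp add: wd_def)
qed

lemma image_invol: "\<forall>x. A (A x) = x \<Longrightarrow> A ` (A ` T) = T"
  by (simp add: image_image)

lemma CE_comp:
  assumes "\<forall>x. A (A x) = x" "A ` X = X" "\<forall>z. f (z \<circ> A) = f z"
  shows "CE e X (A ` S) f (u \<circ> A) = CE e X S f u"
  unfolding CE_def
proof (rule sum.reindex_bij_witness[where i="\<lambda>z. z \<circ> A" and j="\<lambda>z. z \<circ> A"])
  fix a assume a: "a \<in> {z \<in> wd X. \<forall>x\<in>A ` S. z x = (u \<circ> A) x}"
  show "a \<circ> A \<circ> A = a" by (rule comp_invol[OF assms(1)])
  have "a \<circ> A \<in> wd X" using wd_comp[OF assms(1), of a X] a assms(2) by simp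
  moreover have "\<forall>x\<in>S. (a \<circ> A) x = u x" using a assms(1) by (auto simp: image_iff)
  ultimately show "a \<circ> A \<in> {z \<in> wd X. \<forall>x\<in>S. z x = u x}" by simp
  show "wt e X (a \<circ> A) * f (a \<circ> A) = wt e X a * f a"
    using wt_comp[OF assms(1), of e X a] assms(2,3) by simp
next
  fix b assume b: "b \<in> {z \<in> wd X. \<forall>x\<in>S. z x = u x}"
  show "b \<circ> A \<circ> A = b" by (rule comp_invol[OF assms(1)])
  have "b \<circ> A \<in> wd X" using wd_comp[OF assms(1), of b X] b assms(2) by simp
  moreover have "\<forall>x\<in>A ` S. (b \<circ> A) x = (u \<circ> A) x" using b assms(1) by auto
  ultimately show "b \<circ> A \<in> {z \<in> wd X. \<forall>x\<in>A ` S. z x = (u \<circ> A) x}" by simp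
qed

lemma Q_inv:
  assumes "\<forall>x. A (A x) = x" "A ` X = X" "\<forall>z. f (z \<circ> A) = f z"
  shows "Q e X (A ` S) f = Q e X S f"
  unfolding Q_def
proof (rule sum.reindex_bij_witness[where i="\<lambda>z. z \<circ> A" and j="\<lambda>z. z \<circ> A"])
  fix a assume a: "a \<in> wd (A ` S)"
  show "a \<circ> A \<circ> A = a" by (rule comp_invol[OF assms(1)])
  show "a \<circ> A \<in> wd S" using wd_comp[OF assms(1) a] image_invol[OF assms(1)] by simp
  have aa: "a = (a \<circ> A) \<circ> A" by (rule comp_invol[OF assms(1), symmetric])
  have "CE e X (A ` S) f a = CE e X S f (a \<circ> A)"
    by (subst aa, rule CE_comp[OF assms])
  moreover have "wt e (A ` S) a = wt e S (a \<circ> A)"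
    by (subst aa, rule wt_comp[OF assms(1)])
  ultimately show "(CE e X S f (a \<circ> A))\<^sup>2 / wt e S (a \<circ> A) = (CE e X (A ` S) f a)\<^sup>2 / wt e (A ` S) a"
    by simp
next
  fix b assume b: "b \<in> wd S"
  show "b \<circ> A \<circ> A = b" by (rule comp_invol[OF assms(1)])
  show "b \<circ> A \<in> wd (A ` S)" using wd_comp[OF assms(1) b] .
qed

lemma sum_CE:
  assumes "finite X" "S \<subseteq> X"
  shows "(\<Sum>v\<in>wd S. CE e X S f v) = (\<Sum>z\<in>wd X. wt e X z * f z)"
proof -
  define g where "g = (\<lambda>z::'a \<Rightarrow> bool. \<lambda>x. x \<in> S \<and> z x)"
  have fS: "finite S" using assms finite_subset by blast
  have im: "g ` wd X \<subseteq> wd S" by (auto simp: g_def wd_def)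
  have eq: "{z. z \<in> wd X \<and> g z = v} = {z\<in>wd X. \<forall>x\<in>S. z x = v x}" if "v \<in> wd S" for v
  proof (rule Collect_cong)
    fix z
    have "g z = v \<longleftrightarrow> (\<forall>x\<in>S. z x = v x)"
    proof
      assume "g z = v" then show "\<forall>x\<in>S. z x = v x" by (auto simp: g_def)
    next
      assume h: "\<forall>x\<in>S. z x = v x"
      show "g z = v"
      proof
        fix x show "g z x = v x" using h that by (cases "x \<in> S") (auto simp: g_def wd_def)
      qed
    qed
    then show "(z \<in> wd X \<and> g z = v) = (z \<in> wd X \<and> (\<forall>x\<in>S. z x = v x))" by simp
  qed
  have "(\<Sum>v\<in>wd S. CE e X S f v) = (\<Sum>v\<in>wd S. \<Sum>z\<in>{z. z \<in> wd X \<and> g z = v}. wt e X z * f z)"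
    unfolding CE_def by (rule sum.cong[OF refl]) (simp add: eq)
  also have "\<dots> = (\<Sum>z\<in>wd X. wt e X z * f z)"
    by (rule sum.group[OF finite_wd[OF assms(1)] finite_wd[OF fS] im])
  finally show ?thesis .
qed

lemma CE_one:
  assumes "finite X" "S \<subseteq> X"
  shows "CE e X S (\<lambda>_. 1) v = wt e S v"
  using assms
proof (induction X arbitrary: S rule: finite_induct)
  case empty
  then have "S = {}" by simp
  then show ?case unfolding CE_def by (simp add: wd_empty wt_empty)
next
  case (insert n X)
  have sub: "S - {n} \<subseteq> X" using insert(4) by auto
  have IH: "CE e X (S - {n}) (\<lambda>_. 1) v = wt e (S - {n}) v" by (rule insert(3)[OF sub])
  have fS: "finite (S - {n})" using insert(1) sub finite_subset by blast
  have C: "CE e (insert n X) S (\<lambda>_. 1) v =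
     (if n \<in> S \<and> v n then 0 else (1-e) * wt e (S - {n}) v) + (if n \<in> S \<and> \<not> v n then 0 else e * wt e (S - {n}) v)"
    using CE_insert[OF insert(1,2), of e S "\<lambda>_. 1" v] by (simp only: IH)
  show ?case
  proof (cases "n \<in> S")
    case True
    then have "S = insert n (S - {n})" by auto
    then have "wt e S v = wb e (v n) * wt e (S - {n}) v"
      unfolding wt_def using fS by (metis Diff_iff insertI1 prod.insert)
    then show ?thesis unfolding C using True by (simp add: wb_def)
  next
    case False
    then have "S - {n} = S" by auto
    then show ?thesis unfolding C using False by (simp add: algebra_simps)
  qed
qed



definition mon :: "nat \<Rightarrow> nat set \<Rightarrow> bool list \<Rightarrow> bool" where
  "mon m S x = (x \<in> pts m \<and> (\<forall>i\<in>S. x ! i))"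
definition Mon :: "nat \<Rightarrow> nat \<Rightarrow> nat set set" where
  "Mon m r = {S. S \<subseteq> {0..<m} \<and> card S \<le> r}"

lemma finite_Mon: "finite (Mon m r)"
proof -
  have "Mon m r \<subseteq> Pow {0..<m}" by (auto simp: Mon_def)
  then show ?thesis by (rule finite_subset) simp
qed

lemma rm_eval_alt: "rm_eval m r c x = odd (card {S\<in>Mon m r. c S \<and> mon m S x})"
proof (cases "x \<in> pts m")
  case True
  have "{S. S \<subseteq> {0..<m} \<and> card S \<le> r \<and> c S \<and> (\<forall>i\<in>S. x ! i)} = {S\<in>Mon m r. c S \<and> mon m S x}"
    using True by (auto simp: Mon_def mon_def)
  then show ?thesis using True by (simp add: rm_eval_def)
next
  case False
  then have e: "{S\<in>Mon m r. c S \<and> mon m S x} = {}" by (auto simp: mon_def)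
  show ?thesis unfolding rm_eval_def e using False by simp
qed

lemma parity_symdiff:
  assumes "finite A" "finite B"
  shows "odd (card ((A - B) \<union> (B - A))) = (odd (card A) \<noteq> odd (card B))"
proof -
  have f: "finite (A - B)" "finite (B - A)" "finite (A \<inter> B)" using assms by auto
  have c1: "card ((A - B) \<union> (B - A)) = card (A - B) + card (B - A)"
    by (rule card_Un_disjoint) (use f in auto)
  have "A = (A - B) \<union> (A \<inter> B)" by auto
  then have c2: "card A = card (A - B) + card (A \<inter> B)"
    by (metis Diff_Int_distrib2 Diff_disjoint Int_Diff_disjoint card_Un_disjoint f(1) f(3) inf_commute)
  have "B = (B - A) \<union> (A \<inter> B)" by auto
  then have c3: "card B = card (B - A) + card (A \<inter> B)"
    by (metis Int_Diff_disjoint Int_commute card_Un_disjoint f(2) f(3))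
  show ?thesis unfolding c1 c2 c3 by presburger
qed

lemma RM_iff: "f \<in> RM m r \<longleftrightarrow> (\<exists>c. f = rm_eval m r c)"
  by (simp add: RM_def)

lemma RM_xor:
  assumes "f \<in> RM m r" "g \<in> RM m r"
  shows "(\<lambda>x. f x \<noteq> g x) \<in> RM m r"
proof -
  obtain c1 c2 where c: "f = rm_eval m r c1" "g = rm_eval m r c2" using assms by (auto simp: RM_def)
  have "(\<lambda>x. f x \<noteq> g x) = rm_eval m r (\<lambda>S. c1 S \<noteq> c2 S)"
  proof
    fix x
    let ?A = "{S\<in>Mon m r. c1 S \<and> mon m S x}" and ?B = "{S\<in>Mon m r. c2 S \<and> mon m S x}"
    have fin: "finite ?A" "finite ?B" using finite_Mon by auto
    have "{S\<in>Mon m r. (c1 S \<noteq> c2 S) \<and> mon m S x} = (?A - ?B) \<union> (?B - ?A)" by auto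
    then show "(f x \<noteq> g x) = rm_eval m r (\<lambda>S. c1 S \<noteq> c2 S) x"
      unfolding c rm_eval_alt using parity_symdiff[OF fin] by simp
  qed
  then show ?thesis by (auto simp: RM_def)
qed

lemma RM_false: "(\<lambda>x. False) \<in> RM m r"
proof -
  have "(\<lambda>x. False) = rm_eval m r (\<lambda>_. False)" by (simp add: fun_eq_iff rm_eval_alt)
  then show ?thesis by (auto simp: RM_def)
qed

lemma RM_psum:
  assumes "finite I" "\<forall>i\<in>I. g i \<in> RM m r"
  shows "(\<lambda>x. odd (card {i\<in>I. g i x})) \<in> RM m r"
  using assms
proof (induction I rule: finite_induct)
  case empty then show ?case using RM_false by simp
next
  case (insert a I)
  have "(\<lambda>x. odd (card {i\<in>insert a I. g i x})) = (\<lambda>x. g a x \<noteq> odd (card {i\<in>I. g i x}))"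
  proof
    fix x
    have fin: "finite {i\<in>I. g i x}" using insert(1) by auto
    show "odd (card {i\<in>insert a I. g i x}) = (g a x \<noteq> odd (card {i\<in>I. g i x}))"
    proof (cases "g a x")
      case True
      then have "{i\<in>insert a I. g i x} = insert a {i\<in>I. g i x}" by auto
      then show ?thesis using True insert(2) fin by simp
    next
      case False
      then have "{i\<in>insert a I. g i x} = {i\<in>I. g i x}" by auto
      then show ?thesis using False by simp
    qed
  qed
  moreover have "(\<lambda>x. g a x \<noteq> odd (card {i\<in>I. g i x})) \<in> RM m r"
    by (rule RM_xor) (use insert in auto)
  ultimately show ?case by simp
qed

lemma RM_mon:
  assumes "S \<in> Mon m r"
  shows "mon m S \<in> RM m r"
proof -
  have "mon m S = rm_eval m r (\<lambda>T. T = S)"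
  proof
    fix x
    have "{T\<in>Mon m r. T = S \<and> mon m T x} = (if mon m S x then {S} else {})" using assms by auto
    then show "mon m S x = rm_eval m r (\<lambda>T. T = S) x" unfolding rm_eval_alt by simp
  qed
  then show ?thesis by (auto simp: RM_def)
qed

definition sig :: "nat \<Rightarrow> nat \<Rightarrow> nat set \<Rightarrow> bool list \<Rightarrow> bool list" where
  "sig m b T x = (if length x = m then x[b := (x ! b \<noteq> odd (card {i\<in>T. x ! i}))] else x)"

lemma sig_pts: "sig m b T x \<in> pts m \<longleftrightarrow> x \<in> pts m"
  by (simp add: sig_def pts_def)

lemma sig_nth: "x \<in> pts m \<Longrightarrow> b < m \<Longrightarrow> sig m b T x ! i = (if i = b then x ! b \<noteq> odd (card {i\<in>T. x ! i}) else x ! i)"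
  by (simp add: sig_def pts_def nth_list_update)

lemma RM_mon_sig:
  assumes "S \<in> Mon m r" "b < m" "T \<subseteq> {0..<m}" "b \<notin> T"
  shows "mon m S \<circ> sig m b T \<in> RM m r"
proof (cases "b \<in> S")
  case False
  have "mon m S \<circ> sig m b T = mon m S"
  proof
    fix x show "(mon m S \<circ> sig m b T) x = mon m S x"
    proof (cases "x \<in> pts m")
      case True
      have "\<forall>i\<in>S. sig m b T x ! i = x ! i" using sig_nth[OF True assms(2)] False by auto
      then show ?thesis using True sig_pts by (simp add: mon_def)
    next
      case False then show ?thesis by (simp add: mon_def sig_pts)
    qed
  qed
  then show ?thesis using RM_mon[OF assms(1)] by simp
next
  case True
  have fS: "finite S" using assms(1) by (auto simp: Mon_def intro: finite_subset)
  have mem: "insert i (S - {b}) \<in> Mon m r" if "i \<in> T" for i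
  proof -
    have "card (insert i (S - {b})) \<le> Suc (card (S - {b}))" by (simp add: card_insert_le_m1)
    also have "\<dots> = card S" by (rule card_Suc_Diff1[OF fS True])
    finally show ?thesis using assms(1,3) that by (auto simp: Mon_def)
  qed
  have fT: "finite T" using assms(3) finite_subset by blast
  have eq: "mon m S \<circ> sig m b T = (\<lambda>x. mon m S x \<noteq> odd (card {i\<in>T. mon m (insert i (S - {b})) x}))"
  proof
    fix x show "(mon m S \<circ> sig m b T) x = (mon m S x \<noteq> odd (card {i\<in>T. mon m (insert i (S - {b})) x}))"
    proof (cases "x \<in> pts m")
      case False then show ?thesis by (simp add: mon_def sig_pts)
    next
      case xp: True
      let ?P = "\<forall>j\<in>S - {b}. x ! j"
      have L: "(mon m S \<circ> sig m b T) x = (?P \<and> (x ! b \<noteq> odd (card {i\<in>T. x ! i})))"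
        using sig_nth[OF xp assms(2)] sig_pts xp True by (auto simp: mon_def)
      have R1: "mon m S x = (?P \<and> x ! b)" using xp True by (auto simp: mon_def)
      have R2: "{i\<in>T. mon m (insert i (S - {b})) x} = (if ?P then {i\<in>T. x ! i} else {})"
        using xp by (auto simp: mon_def)
      show ?thesis unfolding L R1 R2 by auto
    qed
  qed
  show ?thesis unfolding eq
    by (rule RM_xor[OF RM_mon[OF assms(1)] RM_psum[OF fT]]) (use mem RM_mon in blast)
qed

lemma RM_sig:
  assumes "f \<in> RM m r" "b < m" "T \<subseteq> {0..<m}" "b \<notin> T"
  shows "f \<circ> sig m b T \<in> RM m r"
proof -
  obtain c where c: "f = rm_eval m r c" using assms(1) by (auto simp: RM_def)
  have "f \<circ> sig m b T = (\<lambda>x. odd (card {S\<in>{S\<in>Mon m r. c S}. (mon m S \<circ> sig m b T) x}))"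
    unfolding c by (auto simp: rm_eval_alt fun_eq_iff intro!: arg_cong[where f="\<lambda>A. odd (card A)"])
  also have "\<dots> \<in> RM m r"
    by (rule RM_psum[of "{S\<in>Mon m r. c S}" "\<lambda>S. mon m S \<circ> sig m b T"]) (use finite_Mon RM_mon_sig assms(2-4) in auto)
  finally show ?thesis .
qed


definition Lbit :: "nat \<Rightarrow> (nat \<Rightarrow> nat \<Rightarrow> bool) \<Rightarrow> bool list \<Rightarrow> nat \<Rightarrow> bool" where
  "Lbit mu M x j = odd (card {i. i < mu \<and> M j i \<and> x ! i})"

definition Amap :: "nat \<Rightarrow> nat \<Rightarrow> (nat \<Rightarrow> nat \<Rightarrow> bool) \<Rightarrow> nat \<Rightarrow> bool list \<Rightarrow> bool list" where
  "Amap m mu M t x = (if length x = m then map (\<lambda>p. if mu \<le> p \<and> p < mu + t then x ! p \<noteq> Lbit mu M x (p - mu) else x ! p) [0..<m] else x)"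

lemma Amap_length: "length (Amap m mu M t x) = length x"
  by (simp add: Amap_def)

lemma Amap_nth: "length x = m \<Longrightarrow> p < m \<Longrightarrow>
  Amap m mu M t x ! p = (if mu \<le> p \<and> p < mu + t then x ! p \<noteq> Lbit mu M x (p - mu) else x ! p)"
  by (simp add: Amap_def)

lemma Amap_0: "Amap m mu M 0 x = x"
proof (cases "length x = m")
  case True
  show ?thesis
  proof (rule nth_equalityI)
    show "length (Amap m mu M 0 x) = length x" by (simp add: Amap_length)
  next
    fix i assume "i < length (Amap m mu M 0 x)"
    then have "i < m" using True by (simp add: Amap_length)
    then show "Amap m mu M 0 x ! i = x ! i" using Amap_nth[OF True, of i mu M 0] by auto
  qed
qed (simp add: Amap_def)

lemma Amap_Suc:
  assumes "mu + t < m"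
  shows "Amap m mu M (Suc t) x = sig m (mu + t) {i. i < mu \<and> M t i} (Amap m mu M t x)"
proof (cases "length x = m")
  case True
  let ?y = "Amap m mu M t x"
  have ly: "length ?y = m" using True by (simp add: Amap_length)
  have yp: "?y \<in> pts m" using ly by (simp add: pts_def)
  have ylow: "?y ! i = x ! i" if "i < mu" for i using that assms True by (simp add: Amap_nth)
  have setq: "{i \<in> {i. i < mu \<and> M t i}. ?y ! i} = {i. i < mu \<and> M t i \<and> x ! i}" using ylow by auto
  show ?thesis
  proof (rule nth_equalityI)
    show "length (Amap m mu M (Suc t) x) = length (sig m (mu + t) {i. i < mu \<and> M t i} ?y)"
      by (simp add: Amap_length sig_def ly)
  next
    fix p assume "p < length (Amap m mu M (Suc t) x)"
    then have p: "p < m" using True by (simp add: Amap_length)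
    show "Amap m mu M (Suc t) x ! p = sig m (mu + t) {i. i < mu \<and> M t i} ?y ! p"
      unfolding sig_nth[OF yp assms] setq
      using p True assms by (auto simp: Amap_nth Lbit_def)
  qed
qed (simp add: Amap_def sig_def)

lemma Amap_big:
  assumes "m \<le> mu + t"
  shows "Amap m mu M (Suc t) x = Amap m mu M t x"
proof (cases "length x = m")
  case True
  show ?thesis
  proof (rule nth_equalityI)
    show "length (Amap m mu M (Suc t) x) = length (Amap m mu M t x)" by (simp add: Amap_length)
  next
    fix i assume "i < length (Amap m mu M (Suc t) x)"
    then have i: "i < m" using True by (simp add: Amap_length)
    show "Amap m mu M (Suc t) x ! i = Amap m mu M t x ! i"
      unfolding Amap_nth[OF True i] using i assms by simp
  qed
qed (simp add: Amap_def)

lemma RM_Amap: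
  assumes "mu \<le> m" "f \<in> RM m r"
  shows "f \<circ> Amap m mu M t \<in> RM m r"
  using assms(2)
proof (induction t arbitrary: f)
  case 0
  have "f \<circ> Amap m mu M 0 = f" by (simp add: fun_eq_iff Amap_0)
  then show ?case using 0 by simp
next
  case (Suc t)
  show ?case
  proof (cases "mu + t < m")
    case True
    have "f \<circ> Amap m mu M (Suc t) = (f \<circ> sig m (mu + t) {i. i < mu \<and> M t i}) \<circ> Amap m mu M t"
      by (simp add: fun_eq_iff Amap_Suc[OF True])
    moreover have "f \<circ> sig m (mu + t) {i. i < mu \<and> M t i} \<in> RM m r"
      by (rule RM_sig[OF Suc(2) True]) (use assms(1) in auto)
    ultimately show ?thesis by (simp only:) (rule Suc(1))
  next
    case False
    then have "f \<circ> Amap m mu M (Suc t) = f \<circ> Amap m mu M t"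
      by (simp add: fun_eq_iff Amap_big)
    then show ?thesis using Suc by simp
  qed
qed

definition Af :: "nat \<Rightarrow> nat \<Rightarrow> (nat \<Rightarrow> nat \<Rightarrow> bool) \<Rightarrow> bool list \<Rightarrow> bool list" where
  "Af m mu M = Amap m mu M (m - mu)"

lemma Af_nth: "mu \<le> m \<Longrightarrow> length x = m \<Longrightarrow> p < m \<Longrightarrow>
  Af m mu M x ! p = (if mu \<le> p then x ! p \<noteq> Lbit mu M x (p - mu) else x ! p)"
  by (simp add: Af_def Amap_nth)

lemma Af_length: "length (Af m mu M x) = length x"
  by (simp add: Af_def Amap_length)

lemma Af_invol:
  assumes "mu \<le> m"
  shows "Af m mu M (Af m mu M x) = x"
proof (cases "length x = m")
  case True
  let ?y = "Af m mu M x"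
  have ly: "length ?y = m" using True by (simp add: Af_length)
  have ylow: "?y ! i = x ! i" if "i < mu" for i using that assms True by (simp add: Af_nth)
  have L: "Lbit mu M ?y j = Lbit mu M x j" for j
  proof -
    have "{i. i < mu \<and> M j i \<and> ?y ! i} = {i. i < mu \<and> M j i \<and> x ! i}" using ylow by auto
    then show ?thesis unfolding Lbit_def by simp
  qed
  show ?thesis
  proof (rule nth_equalityI)
    show "length (Af m mu M ?y) = length x" by (simp add: Af_length)
  next
    fix p assume "p < length (Af m mu M ?y)"
    then have p: "p < m" using ly by (simp add: Af_length)
    show "Af m mu M ?y ! p = x ! p"
      using Af_nth[OF assms ly p, of M] Af_nth[OF assms True p, of M] L[of "p - mu"] by auto
  qed
next
  case False
  then show ?thesis by (simp add: Af_def Amap_def)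
qed

lemma Af_zero:
  assumes "mu \<le> m"
  shows "Af m mu M (zero_pt m) = zero_pt m"
proof (rule nth_equalityI)
  show "length (Af m mu M (zero_pt m)) = length (zero_pt m)" by (simp add: Af_length)
next
  fix p assume "p < length (Af m mu M (zero_pt m))"
  then have p: "p < m" by (simp add: Af_length zero_pt_def)
  have "Lbit mu M (zero_pt m) j = False" for j
  proof -
    have e: "{i. i < mu \<and> M j i \<and> zero_pt m ! i} = {}"
      using assms by (auto simp: zero_pt_def)
    show ?thesis unfolding Lbit_def e by simp
  qed
  then show "Af m mu M (zero_pt m) ! p = zero_pt m ! p"
    using Af_nth[OF assms _ p, of "zero_pt m" M] p by (simp add: zero_pt_def)
qed

lemma Af_pts: "Af m mu M x \<in> pts m \<longleftrightarrow> x \<in> pts m"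
  by (simp add: pts_def Af_length)

lemma RM_Af: "mu \<le> m \<Longrightarrow> f \<in> RM m r \<Longrightarrow> f \<circ> Af m mu M \<in> RM m r"
  unfolding Af_def by (rule RM_Amap)



lemma sum_invol:
  assumes "\<forall>x\<in>S. A (A x) = x" "\<forall>x\<in>S. A x \<in> S" "\<forall>x\<in>S. g (A x) = h x"
  shows "sum g S = sum h S"
proof (rule sum.reindex_bij_witness[where i=A and j=A])
  fix a assume a: "a \<in> S"
  show aa: "A (A a) = a" using assms(1) a by simp
  show a2: "A a \<in> S" using assms(2) a by simp
  have "g (A (A a)) = h (A a)" using assms(3) a2 by simp
  then show "h (A a) = g a" using aa by simp
qed (simp_all add: assms(1,2))

lemma prod_invol:
  assumes "\<forall>x\<in>S. A (A x) = x" "\<forall>x\<in>S. A x \<in> S" "\<forall>x\<in>S. g (A x) = h x"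
  shows "prod g S = prod h S"
proof (rule prod.reindex_bij_witness[where i=A and j=A])
  fix a assume a: "a \<in> S"
  show aa: "A (A a) = a" using assms(1) a by simp
  show a2: "A a \<in> S" using assms(2) a by simp
  have "g (A (A a)) = h (A a)" using assms(3) a2 by simp
  then show "h (A a) = g a" using aa by simp
qed (simp_all add: assms(1,2))

lemma finite_pts: "finite (pts m)"
proof -
  have "pts m = {xs. set xs \<subseteq> (UNIV :: bool set) \<and> length xs = m}" by (simp add: pts_def)
  then show ?thesis using finite_lists_length_eq[of "UNIV :: bool set" m] by simp
qed

lemma zero_in: "zero_pt m \<in> pts m" by (simp add: zero_pt_def pts_def)

lemma finite_RM: "finite (RM m r)"
proof -
  have "RM m r \<subseteq> (\<lambda>C. rm_eval m r (\<lambda>S. S \<in> C)) ` Pow (Mon m r)"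
  proof
    fix f assume "f \<in> RM m r"
    then obtain c where c: "f = rm_eval m r c" by (auto simp: RM_def)
    have "f = rm_eval m r (\<lambda>S. S \<in> {S\<in>Mon m r. c S})"
    proof
      fix x
      have "{S\<in>Mon m r. c S \<and> mon m S x} = {S\<in>Mon m r. S \<in> {S\<in>Mon m r. c S} \<and> mon m S x}" by auto
      then show "f x = rm_eval m r (\<lambda>S. S \<in> {S\<in>Mon m r. c S}) x" unfolding c rm_eval_alt by simp
    qed
    then show "f \<in> (\<lambda>C. rm_eval m r (\<lambda>S. S \<in> C)) ` Pow (Mon m r)" by blast
  qed
  then show ?thesis by (rule finite_subset) (simp add: finite_Mon)
qed

lemma card_RM_pos: "card (RM m r) > 0"
  using finite_RM RM_false card_gt_0_iff by blast

lemma RM_words: "f \<in> RM m r \<Longrightarrow> f \<in> words m"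
proof -
  assume "f \<in> RM m r"
  then obtain c where c: "f = rm_eval m r c" by (auto simp: RM_def)
  show ?thesis unfolding words_def c rm_eval_def by auto
qed

lemma words_wd: "words m = wd (pts m)" by (simp add: words_def wd_def)

lemma noise_wt: "noise_w m eps z = wt eps (pts m) z"
  by (simp add: noise_w_def wt_def wb_def)

definition Phi :: "nat \<Rightarrow> nat \<Rightarrow> real \<Rightarrow> (bool list \<Rightarrow> bool) \<Rightarrow> real" where
  "Phi m r eps z = (\<Sum>f\<in>RM m r. dec_err m r eps (f (zero_pt m)) (\<lambda>x. f x \<noteq> z x)) / real (card (RM m r))"

lemma dec_err_range: "0 \<le> dec_err m r eps b y" "dec_err m r eps b y \<le> 1"
  by (auto simp: dec_err_def)

lemma Phi_range: "0 \<le> Phi m r eps z" "Phi m r eps z \<le> 1"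
proof -
  have N: "real (card (RM m r)) > 0" using card_RM_pos by simp
  have s0: "0 \<le> (\<Sum>f\<in>RM m r. dec_err m r eps (f (zero_pt m)) (\<lambda>x. f x \<noteq> z x))"
    by (rule sum_nonneg) (simp add: dec_err_range)
  have "(\<Sum>f\<in>RM m r. dec_err m r eps (f (zero_pt m)) (\<lambda>x. f x \<noteq> z x)) \<le> (\<Sum>f\<in>RM m r. 1)"
    by (rule sum_mono) (simp add: dec_err_range)
  then have s1: "(\<Sum>f\<in>RM m r. dec_err m r eps (f (zero_pt m)) (\<lambda>x. f x \<noteq> z x)) \<le> real (card (RM m r))" by simp
  show "0 \<le> Phi m r eps z" unfolding Phi_def using s0 N by simp
  show "Phi m r eps z \<le> 1" unfolding Phi_def using s1 N by simp
qed

lemma lik_cong: "(\<forall>x\<in>pts m - {zero_pt m}. y x = y' x) \<Longrightarrow> lik m eps f y = lik m eps f y'"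
  unfolding lik_def by (rule prod.cong) auto

lemma post_cong: "(\<forall>x\<in>pts m - {zero_pt m}. y x = y' x) \<Longrightarrow> post m r eps b y = post m r eps b y'"
  unfolding post_def by (rule sum.cong[OF refl]) (rule lik_cong)

lemma dec_err_cong: "(\<forall>x\<in>pts m - {zero_pt m}. y x = y' x) \<Longrightarrow> dec_err m r eps b y = dec_err m r eps b y'"
  unfolding dec_err_def using post_cong[of m y y' r eps] by simp

lemma Phi_indep: "Phi m r eps (z(zero_pt m := True)) = Phi m r eps (z(zero_pt m := False))"
proof -
  have "dec_err m r eps (f (zero_pt m)) (\<lambda>x. f x \<noteq> (z(zero_pt m := True)) x) =
        dec_err m r eps (f (zero_pt m)) (\<lambda>x. f x \<noteq> (z(zero_pt m := False)) x)" for f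
    by (rule dec_err_cong) auto
  then show ?thesis unfolding Phi_def by simp
qed



lemma Af_P0:
  assumes "mu \<le> m" "x \<in> pts m - {zero_pt m}"
  shows "Af m mu M x \<in> pts m - {zero_pt m}"
proof -
  have "Af m mu M x \<in> pts m" using assms(2) Af_pts by blast
  moreover have "Af m mu M x \<noteq> zero_pt m"
  proof
    assume "Af m mu M x = zero_pt m"
    then have "Af m mu M (Af m mu M x) = Af m mu M (zero_pt m)" by simp
    then have "x = zero_pt m" using Af_invol[OF assms(1)] Af_zero[OF assms(1)] by simp
    then show False using assms(2) by simp
  qed
  ultimately show ?thesis by simp
qed

lemma lik_Af:
  assumes "mu \<le> m"
  shows "lik m eps h (y \<circ> Af m mu M) = lik m eps (h \<circ> Af m mu M) y"
  unfolding lik_def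
  by (rule prod_invol[where A="Af m mu M"]) (use Af_invol[OF assms] Af_P0[OF assms] in auto)

lemma post_Af:
  assumes "mu \<le> m"
  shows "post m r eps b (y \<circ> Af m mu M) = post m r eps b y"
proof -
  let ?A = "Af m mu M"
  let ?S = "{f \<in> RM m r. f (zero_pt m) = b}"
  have AA: "h \<circ> ?A \<circ> ?A = h" for h :: "bool list \<Rightarrow> bool" by (simp add: fun_eq_iff Af_invol[OF assms])
  have i1: "\<forall>h\<in>?S. h \<circ> ?A \<circ> ?A = h" using AA by blast
  have i2: "\<forall>h\<in>?S. h \<circ> ?A \<in> ?S" using RM_Af[OF assms] Af_zero[OF assms] by simp
  have i3: "\<forall>h\<in>?S. lik m eps (h \<circ> ?A \<circ> ?A) y = lik m eps h y"
    using AA by simp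
  have "post m r eps b (y \<circ> ?A) = (\<Sum>h\<in>?S. lik m eps (h \<circ> ?A) y)"
    unfolding post_def lik_Af[OF assms] ..
  also have "\<dots> = (\<Sum>h\<in>?S. lik m eps h y)"
    by (rule sum_invol[where A="\<lambda>h. h \<circ> ?A", OF i1 i2 i3])
  finally show ?thesis unfolding post_def .
qed

lemma dec_err_Af:
  assumes "mu \<le> m"
  shows "dec_err m r eps b (y \<circ> Af m mu M) = dec_err m r eps b y"
  unfolding dec_err_def post_Af[OF assms] ..

lemma Phi_Af:
  assumes "mu \<le> m"
  shows "Phi m r eps (z \<circ> Af m mu M) = Phi m r eps z"
proof -
  let ?A = "Af m mu M"
  have "(\<Sum>f\<in>RM m r. dec_err m r eps (f (zero_pt m)) (\<lambda>x. f x \<noteq> (z \<circ> ?A) x)) =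
        (\<Sum>f\<in>RM m r. dec_err m r eps (f (zero_pt m)) (\<lambda>x. f x \<noteq> z x))"
  proof (rule sum_invol[where A="\<lambda>h. h \<circ> ?A"], safe)
    fix h assume h: "h \<in> RM m r"
    show "h \<circ> ?A \<circ> ?A = h" by (simp add: fun_eq_iff Af_invol[OF assms])
    show "h \<circ> ?A \<in> RM m r" using RM_Af[OF assms h] .
    have "(\<lambda>x. (h \<circ> ?A) x \<noteq> (z \<circ> ?A) x) = (\<lambda>x. h x \<noteq> z x) \<circ> ?A" by (simp add: comp_def)
    then show "dec_err m r eps ((h \<circ> ?A) (zero_pt m)) (\<lambda>x. (h \<circ> ?A) x \<noteq> (z \<circ> ?A) x) =
          dec_err m r eps (h (zero_pt m)) (\<lambda>x. h x \<noteq> z x)"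
      by (simp add: dec_err_Af[OF assms] Af_zero[OF assms])
  qed
  then show ?thesis unfolding Phi_def by simp
qed



lemma Pe_Phi: "Pe m r eps = (\<Sum>z\<in>words m. noise_w m eps z * Phi m r eps z)"
proof -
  have "Pe m r eps = (\<Sum>f\<in>RM m r. \<Sum>z\<in>words m. noise_w m eps z * dec_err m r eps (f (zero_pt m)) (\<lambda>x. f x \<noteq> z x) / real (card (RM m r)))"
    unfolding Pe_def err_term_def ..
  also have "\<dots> = (\<Sum>z\<in>words m. \<Sum>f\<in>RM m r. noise_w m eps z * dec_err m r eps (f (zero_pt m)) (\<lambda>x. f x \<noteq> z x) / real (card (RM m r)))"
    by (rule sum.swap)
  also have "\<dots> = (\<Sum>z\<in>words m. noise_w m eps z * Phi m r eps z)"
    unfolding Phi_def by (simp add: sum_distrib_left sum_divide_distrib)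
  finally show ?thesis .
qed

lemma noise_split: "noise_w m eps (\<lambda>x. f x \<noteq> y x) = wb eps (f (zero_pt m) \<noteq> y (zero_pt m)) * lik m eps f y"
proof -
  have "noise_w m eps (\<lambda>x. f x \<noteq> y x) = (if f (zero_pt m) \<noteq> y (zero_pt m) then eps else 1 - eps) *
     (\<Prod>x\<in>pts m - {zero_pt m}. if f x \<noteq> y x then eps else 1 - eps)"
    unfolding noise_w_def by (rule prod.remove[OF finite_pts zero_in])
  also have "(\<Prod>x\<in>pts m - {zero_pt m}. if f x \<noteq> y x then eps else 1 - eps) = lik m eps f y"
    unfolding lik_def by (rule prod.cong) auto
  finally show ?thesis by (simp add: wb_def)
qed

lemma sum_RM_split:
  "(\<Sum>f\<in>RM m r. G (f (zero_pt m)) f) = (\<Sum>f\<in>{f\<in>RM m r. f (zero_pt m) = True}. G True f) + (\<Sum>f\<in>{f\<in>RM m r. f (zero_pt m) = False}. G False f)"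
proof -
  have "RM m r = {f\<in>RM m r. f (zero_pt m) = True} \<union> {f\<in>RM m r. f (zero_pt m) = False}" by auto
  then have "(\<Sum>f\<in>RM m r. G (f (zero_pt m)) f) = (\<Sum>f\<in>{f\<in>RM m r. f (zero_pt m) = True}. G (f (zero_pt m)) f) + (\<Sum>f\<in>{f\<in>RM m r. f (zero_pt m) = False}. G (f (zero_pt m)) f)"
    by (metis (no_types, lifting) sum.union_disjoint finite_RM finite_Un disjoint_iff mem_Collect_eq)
  also have "\<dots> = (\<Sum>f\<in>{f\<in>RM m r. f (zero_pt m) = True}. G True f) + (\<Sum>f\<in>{f\<in>RM m r. f (zero_pt m) = False}. G False f)"
    by (intro arg_cong2[where f="(+)"] sum.cong) auto
  finally show ?thesis .
qed

lemma flip_zero_sum: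
  assumes "\<forall>y c. K (y(zero_pt m := c)) = K y"
  shows "(\<Sum>y\<in>words m. wb eps (\<not> y (zero_pt m)) * K y) = (\<Sum>y\<in>words m. wb eps (y (zero_pt m)) * K y)"
proof (rule sum_invol[where A="\<lambda>y. y(zero_pt m := \<not> y (zero_pt m))"])
  show "\<forall>x\<in>words m. x(zero_pt m := \<not> x (zero_pt m), zero_pt m := \<not> (x(zero_pt m := \<not> x (zero_pt m))) (zero_pt m)) = x"
    by (simp add: fun_eq_iff)
  show "\<forall>x\<in>words m. x(zero_pt m := \<not> x (zero_pt m)) \<in> words m"
    using zero_in by (auto simp: words_def)
  show "\<forall>x\<in>words m. wb eps (\<not> (x(zero_pt m := \<not> x (zero_pt m))) (zero_pt m)) * K (x(zero_pt m := \<not> x (zero_pt m))) =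
      wb eps (x (zero_pt m)) * K x"
    using assms by simp
qed

lemma key_sum:
  assumes "\<forall>b y c. H b (y(zero_pt m := c)) = H b y"
  shows "(\<Sum>f\<in>RM m r. \<Sum>z\<in>words m. noise_w m eps z * H (f (zero_pt m)) (\<lambda>x. f x \<noteq> z x)) =
    (\<Sum>y\<in>words m. wb eps (y (zero_pt m)) * (post m r eps True y * H True y + post m r eps False y * H False y))"
proof -
  have s1: "(\<Sum>z\<in>words m. noise_w m eps z * H (f (zero_pt m)) (\<lambda>x. f x \<noteq> z x)) =
      (\<Sum>y\<in>words m. wb eps (f (zero_pt m) \<noteq> y (zero_pt m)) * lik m eps f y * H (f (zero_pt m)) y)"
    if f: "f \<in> RM m r" for f
  proof -
    have fw: "f \<in> words m" using RM_words[OF f] .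
    have "(\<Sum>z\<in>words m. noise_w m eps z * H (f (zero_pt m)) (\<lambda>x. f x \<noteq> z x)) =
      (\<Sum>y\<in>words m. noise_w m eps (\<lambda>x. f x \<noteq> y x) * H (f (zero_pt m)) y)"
    proof (rule sum_invol[where A="\<lambda>z x. f x \<noteq> z x"])
      show "\<forall>x\<in>words m. (\<lambda>xa. f xa \<noteq> (f xa \<noteq> x xa)) = x" by (auto simp: fun_eq_iff)
      show "\<forall>x\<in>words m. (\<lambda>xa. f xa \<noteq> x xa) \<in> words m" using fw by (auto simp: words_def)
      have ff: "\<And>x. (\<lambda>xa. f xa \<noteq> (f xa \<noteq> x xa)) = x" by (auto simp: fun_eq_iff)
      show "\<forall>x\<in>words m. noise_w m eps (\<lambda>xa. f xa \<noteq> x xa) * H (f (zero_pt m)) (\<lambda>xa. f xa \<noteq> (f xa \<noteq> x xa)) =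
        noise_w m eps (\<lambda>xa. f xa \<noteq> x xa) * H (f (zero_pt m)) x"
        by (simp only: ff) simp
    qed
    then show ?thesis unfolding noise_split by simp
  qed
  have "(\<Sum>f\<in>RM m r. \<Sum>z\<in>words m. noise_w m eps z * H (f (zero_pt m)) (\<lambda>x. f x \<noteq> z x)) =
     (\<Sum>f\<in>RM m r. \<Sum>y\<in>words m. wb eps (f (zero_pt m) \<noteq> y (zero_pt m)) * lik m eps f y * H (f (zero_pt m)) y)"
    by (rule sum.cong[OF refl]) (rule s1)
  also have "\<dots> = (\<Sum>y\<in>words m. \<Sum>f\<in>RM m r. wb eps (f (zero_pt m) \<noteq> y (zero_pt m)) * lik m eps f y * H (f (zero_pt m)) y)"
    by (rule sum.swap)
  also have "\<dots> = (\<Sum>y\<in>words m. wb eps (\<not> y (zero_pt m)) * (H True y * post m r eps True y) + wb eps (y (zero_pt m)) * (H False y * post m r eps False y))"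
  proof (rule sum.cong[OF refl])
    fix y
    show "(\<Sum>f\<in>RM m r. wb eps (f (zero_pt m) \<noteq> y (zero_pt m)) * lik m eps f y * H (f (zero_pt m)) y) =
       wb eps (\<not> y (zero_pt m)) * (H True y * post m r eps True y) + wb eps (y (zero_pt m)) * (H False y * post m r eps False y)"
      unfolding sum_RM_split[of "\<lambda>b f. wb eps (b \<noteq> y (zero_pt m)) * lik m eps f y * H b y"] post_def
      by (simp add: sum_distrib_left sum_distrib_right algebra_simps)
  qed
  also have "\<dots> = (\<Sum>y\<in>words m. wb eps (\<not> y (zero_pt m)) * (H True y * post m r eps True y)) + (\<Sum>y\<in>words m. wb eps (y (zero_pt m)) * (H False y * post m r eps False y))"
    by (rule sum.distrib)
  also have "(\<Sum>y\<in>words m. wb eps (\<not> y (zero_pt m)) * (H True y * post m r eps True y)) = (\<Sum>y\<in>words m. wb eps (y (zero_pt m)) * (H True y * post m r eps True y))"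
  proof (rule flip_zero_sum)
    have "post m r eps True (y(zero_pt m := c)) = post m r eps True y" for y c by (rule post_cong) auto
    then show "\<forall>y c. H True (y(zero_pt m := c)) * post m r eps True (y(zero_pt m := c)) = H True y * post m r eps True y"
      using assms by simp
  qed
  finally show ?thesis by (simp add: sum.distrib[symmetric] algebra_simps)
qed

lemma sum_noise: "(\<Sum>z\<in>words m. noise_w m eps z) = 1"
  unfolding words_wd noise_wt by (rule sum_wt[OF finite_pts])

lemma Pe_le_half:
  assumes "0 < eps" "eps < 1"
  shows "Pe m r eps \<le> 1/2"
proof -
  let ?N = "real (card (RM m r))"
  have N: "?N > 0" using card_RM_pos by simp
  have Hd: "\<forall>b y c. dec_err m r eps b (y(zero_pt m := c)) = dec_err m r eps b y"
    by (intro allI, rule dec_err_cong) auto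
  have H1: "\<forall>b y c. (\<lambda>b y. 1::real) b (y(zero_pt m := c)) = (\<lambda>b y. 1) b y" by simp
  have "?N * Pe m r eps = (\<Sum>f\<in>RM m r. \<Sum>z\<in>words m. noise_w m eps z * dec_err m r eps (f (zero_pt m)) (\<lambda>x. f x \<noteq> z x))"
    unfolding Pe_def err_term_def using N by (simp add: sum_distrib_left)
  also have "\<dots> = (\<Sum>y\<in>words m. wb eps (y (zero_pt m)) * (post m r eps True y * dec_err m r eps True y + post m r eps False y * dec_err m r eps False y))"
    by (rule key_sum[OF Hd])
  also have "\<dots> \<le> (\<Sum>y\<in>words m. wb eps (y (zero_pt m)) * ((post m r eps True y * 1 + post m r eps False y * 1) / 2))"
  proof (rule sum_mono)
    fix y
    have w: "wb eps (y (zero_pt m)) \<ge> 0" using assms by (simp add: wb_def)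
    have "post m r eps True y * dec_err m r eps True y + post m r eps False y * dec_err m r eps False y
        \<le> (post m r eps True y * 1 + post m r eps False y * 1) / 2"
      unfolding dec_err_def by auto
    then show "wb eps (y (zero_pt m)) * (post m r eps True y * dec_err m r eps True y + post m r eps False y * dec_err m r eps False y)
       \<le> wb eps (y (zero_pt m)) * ((post m r eps True y * 1 + post m r eps False y * 1) / 2)"
      using w by (rule mult_left_mono)
  qed
  also have "\<dots> = (\<Sum>y\<in>words m. wb eps (y (zero_pt m)) * (post m r eps True y * 1 + post m r eps False y * 1)) / 2"
    by (simp add: sum_divide_distrib)
  also have "(\<Sum>y\<in>words m. wb eps (y (zero_pt m)) * (post m r eps True y * 1 + post m r eps False y * 1)) =
      (\<Sum>f\<in>RM m r. \<Sum>z\<in>words m. noise_w m eps z * 1)"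
  proof -
    have ks: "(\<Sum>f\<in>RM m r. \<Sum>z\<in>words m. noise_w m eps z * (\<lambda>b y. 1::real) (f (zero_pt m)) (\<lambda>x. f x \<noteq> z x)) =
      (\<Sum>y\<in>words m. wb eps (y (zero_pt m)) * (post m r eps True y * (\<lambda>b y. 1) True y + post m r eps False y * (\<lambda>b y. 1) False y))"
      by (rule key_sum) simp
    then show ?thesis by simp
  qed
  also have "\<dots> = ?N" using sum_noise by simp
  finally have "?N * Pe m r eps \<le> ?N / 2" .
  then show ?thesis using N by (simp add: field_simps)
qed



definition Mset :: "nat \<Rightarrow> nat \<Rightarrow> (nat \<Rightarrow> nat \<Rightarrow> bool) set" where
  "Mset mu k = {M. \<forall>j i. M j i \<longrightarrow> j < k \<and> i < mu}"

definition Wset :: "nat \<Rightarrow> nat \<Rightarrow> bool list set" where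
  "Wset m mu = {x \<in> pts m. \<forall>p. mu \<le> p \<and> p < m \<longrightarrow> \<not> x ! p}"

lemma finite_Mset: "finite (Mset mu k)"
proof -
  have "Mset mu k \<subseteq> (\<lambda>P j i. (j, i) \<in> P) ` Pow ({..<k} \<times> {..<mu})"
  proof
    fix M assume M: "M \<in> Mset mu k"
    have "M = (\<lambda>j i. (j, i) \<in> {(j, i). M j i})" by simp
    moreover have "{(j, i). M j i} \<in> Pow ({..<k} \<times> {..<mu})" using M by (auto simp: Mset_def)
    ultimately show "M \<in> (\<lambda>P j i. (j, i) \<in> P) ` Pow ({..<k} \<times> {..<mu})" by blast
  qed
  then show ?thesis by (rule finite_subset) simp
qed

lemma card_Mset_pos: "card (Mset mu k) > 0"
proof -
  have "(\<lambda>j i. False) \<in> Mset mu k" by (simp add: Mset_def)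
  then show ?thesis using finite_Mset card_gt_0_iff by blast
qed

lemma card_pts: "card (pts k) = 2 ^ k"
proof -
  have "pts k = {xs. set xs \<subseteq> (UNIV :: bool set) \<and> length xs = k}" by (simp add: pts_def)
  then show ?thesis using card_lists_length_eq[of "UNIV :: bool set" k] by simp
qed

lemma parity_toggle:
  assumes "finite S"
  shows "odd (card (if a \<in> S then S - {a} else insert a S)) = (\<not> odd (card S))"
proof (cases "a \<in> S")
  case True
  have "card S = Suc (card (S - {a}))" using card_Suc_Diff1[OF assms True] by simp
  then show ?thesis using True by simp
next
  case False
  then show ?thesis using assms by simp
qed

lemma Af_in_W:
  assumes "mu \<le> m" "x \<in> pts m"
  shows "x \<in> Af m mu M ` Wset m mu \<longleftrightarrow> (\<forall>j < m - mu. x ! (mu + j) = Lbit mu M x j)"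
proof -
  have lx: "length x = m" using assms(2) by (simp add: pts_def)
  have "x \<in> Af m mu M ` Wset m mu \<longleftrightarrow> Af m mu M x \<in> Wset m mu"
  proof
    assume "x \<in> Af m mu M ` Wset m mu"
    then obtain w where "w \<in> Wset m mu" "x = Af m mu M w" by blast
    then show "Af m mu M x \<in> Wset m mu" using Af_invol[OF assms(1)] by simp
  next
    assume "Af m mu M x \<in> Wset m mu"
    moreover have "x = Af m mu M (Af m mu M x)" using Af_invol[OF assms(1)] by simp
    ultimately show "x \<in> Af m mu M ` Wset m mu" by blast
  qed
  also have "\<dots> \<longleftrightarrow> (\<forall>p. mu \<le> p \<and> p < m \<longrightarrow> \<not> Af m mu M x ! p)"
    unfolding Wset_def using Af_pts assms(2) by simp
  also have "\<dots> \<longleftrightarrow> (\<forall>p. mu \<le> p \<and> p < m \<longrightarrow> x ! p = Lbit mu M x (p - mu))"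
    using Af_nth[OF assms(1) lx] by auto
  also have "\<dots> \<longleftrightarrow> (\<forall>j < m - mu. x ! (mu + j) = Lbit mu M x j)"
  proof
    assume h: "\<forall>p. mu \<le> p \<and> p < m \<longrightarrow> x ! p = Lbit mu M x (p - mu)"
    show "\<forall>j < m - mu. x ! (mu + j) = Lbit mu M x j"
    proof (intro allI impI)
      fix j assume "j < m - mu"
      then show "x ! (mu + j) = Lbit mu M x j" using h[rule_format, of "mu + j"] by simp
    qed
  next
    assume h: "\<forall>j < m - mu. x ! (mu + j) = Lbit mu M x j"
    show "\<forall>p. mu \<le> p \<and> p < m \<longrightarrow> x ! p = Lbit mu M x (p - mu)"
    proof (intro allI impI)
      fix p assume p: "mu \<le> p \<and> p < m"
      have pm: "p - mu < m - mu" using p by linarith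
      have pp: "mu + (p - mu) = p" using p by simp
      show "x ! p = Lbit mu M x (p - mu)" using h[rule_format, OF pm] unfolding pp .
    qed
  qed
  finally show ?thesis .
qed

lemma count_bound:
  assumes "mu \<le> m" "x \<in> pts m" "x \<noteq> zero_pt m"
  shows "real (card {M \<in> Mset mu (m - mu). x \<in> Af m mu M ` Wset m mu}) \<le> real (card (Mset mu (m - mu))) / 2 ^ (m - mu)"
proof -
  let ?k = "m - mu"
  let ?J = "Mset mu ?k"
  have lx: "length x = m" using assms(2) by (simp add: pts_def)
  have memb: "x \<in> Af m mu M ` Wset m mu \<longleftrightarrow> (\<forall>j < ?k. x ! (mu + j) = Lbit mu M x j)" for M
    by (rule Af_in_W[OF assms(1,2)])
  show ?thesis
  proof (cases "\<exists>i0<mu. x ! i0")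
    case False
    have e0: "{M \<in> ?J. x \<in> Af m mu M ` Wset m mu} = {}"
    proof (rule equals0I)
      fix M assume "M \<in> {M \<in> ?J. x \<in> Af m mu M ` Wset m mu}"
      then have h: "\<forall>j < ?k. x ! (mu + j) = Lbit mu M x j" using memb by blast
      have L: "Lbit mu M x j = False" for j
      proof -
        have e: "{i. i < mu \<and> M j i \<and> x ! i} = {}" using False by auto
        show ?thesis unfolding Lbit_def e by simp
      qed
      have "x = zero_pt m"
      proof (rule nth_equalityI)
        show "length x = length (zero_pt m)" using lx by (simp add: zero_pt_def)
      next
        fix p assume "p < length x"
        then have p: "p < m" using lx by simp
        show "x ! p = zero_pt m ! p"
        proof (cases "p < mu")
          case True then show ?thesis using False p by (simp add: zero_pt_def)
        next
          case F2: False
          have pm: "p - mu < m - mu" using p F2 by linarith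
          have pp: "mu + (p - mu) = p" using F2 by simp
          have "x ! p = Lbit mu M x (p - mu)" using h[rule_format, OF pm] unfolding pp .
          then show ?thesis using F2 p L by (simp add: zero_pt_def)
        qed
      qed
      then show False using assms(3) by simp
    qed
    show ?thesis unfolding e0 by simp
  next
    case True
    then obtain i0 where i0: "i0 < mu" "x ! i0" by blast
    define vec where "vec = (\<lambda>M. map (Lbit mu M x) [0..<?k])"
    define ux where "ux = map (\<lambda>j. x ! (mu + j)) [0..<?k]"
    define F where "F = (\<lambda>u. {M \<in> ?J. vec M = u})"
    have ux_pts: "ux \<in> pts ?k" by (simp add: ux_def pts_def)
    have vec_pts: "vec M \<in> pts ?k" for M by (simp add: vec_def pts_def)
    have Fux: "{M \<in> ?J. x \<in> Af m mu M ` Wset m mu} = F ux"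
    proof -
      have "x \<in> Af m mu M ` Wset m mu \<longleftrightarrow> vec M = ux" for M
        unfolding memb vec_def ux_def by (auto simp: list_eq_iff_nth_eq)
      then show ?thesis unfolding F_def by auto
    qed
    have finF: "finite (F u)" for u unfolding F_def using finite_Mset by simp
    have cardF: "card (F u) = card (F ux)" if u: "u \<in> pts ?k" for u
    proof -
      define tog where "tog = (\<lambda>M j i. M j i \<noteq> (i = i0 \<and> j < ?k \<and> (u ! j \<noteq> ux ! j)))"
      have togtog: "tog (tog M) = M" for M by (auto simp: tog_def fun_eq_iff)
      have togJ: "tog M \<in> ?J" if "M \<in> ?J" for M using that i0(1) by (auto simp: tog_def Mset_def)
      have vectog: "vec (tog M) ! j = (vec M ! j \<noteq> (u ! j \<noteq> ux ! j))" if j: "j < ?k" for M j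
      proof -
        let ?S = "{i. i < mu \<and> M j i \<and> x ! i}"
        have fS: "finite ?S" by simp
        have "{i. i < mu \<and> tog M j i \<and> x ! i} = (if u ! j \<noteq> ux ! j then (if i0 \<in> ?S then ?S - {i0} else insert i0 ?S) else ?S)"
          using i0 j by (auto simp: tog_def)
        then have "Lbit mu (tog M) x j = (Lbit mu M x j \<noteq> (u ! j \<noteq> ux ! j))"
          unfolding Lbit_def using parity_toggle[OF fS, of i0] by auto
        then show ?thesis using j by (simp add: vec_def)
      qed
      have lu: "length u = ?k" using u by (simp add: pts_def)
      have lux: "length ux = ?k" by (simp add: ux_def)
      have bij: "bij_betw tog (F u) (F ux)"
      proof (rule bij_betw_byWitness[where f'=tog])
        show "\<forall>a\<in>F u. tog (tog a) = a" using togtog by blast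
        show "\<forall>a\<in>F ux. tog (tog a) = a" using togtog by blast
        show "tog ` F u \<subseteq> F ux"
        proof
          fix N assume "N \<in> tog ` F u"
          then obtain M where M: "M \<in> F u" "N = tog M" by blast
          have "vec N = ux"
          proof (rule nth_equalityI)
            show "length (vec N) = length ux" by (simp add: vec_def lux)
          next
            fix j assume "j < length (vec N)"
            then have j: "j < ?k" by (simp add: vec_def)
            show "vec N ! j = ux ! j" using vectog[OF j, of M] M by (auto simp: F_def)
          qed
          then show "N \<in> F ux" using M togJ by (auto simp: F_def)
        qed
        show "tog ` F ux \<subseteq> F u"
        proof
          fix N assume "N \<in> tog ` F ux"
          then obtain M where M: "M \<in> F ux" "N = tog M" by blast
          have "vec N = u"
          proof (rule nth_equalityI)
            show "length (vec N) = length u" by (simp add: vec_def lu)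
          next
            fix j assume "j < length (vec N)"
            then have j: "j < ?k" by (simp add: vec_def)
            show "vec N ! j = u ! j" using vectog[OF j, of M] M by (auto simp: F_def)
          qed
          then show "N \<in> F u" using M togJ by (auto simp: F_def)
        qed
      qed
      then show ?thesis by (rule bij_betw_same_card)
    qed
    have "card ?J = (\<Sum>M\<in>?J. 1::nat)" by simp
    also have "\<dots> = (\<Sum>u\<in>pts ?k. \<Sum>M\<in>{M. M \<in> ?J \<and> vec M = u}. 1)"
      by (rule sum.group[symmetric, OF finite_Mset finite_pts]) (use vec_pts in auto)
    also have "\<dots> = (\<Sum>u\<in>pts ?k. card (F ux))"
    proof (rule sum.cong[OF refl])
      fix u assume "u \<in> pts ?k"
      then have "card (F u) = card (F ux)" by (rule cardF)
      then show "(\<Sum>M\<in>{M. M \<in> ?J \<and> vec M = u}. 1) = card (F ux)" by (simp add: F_def)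
    qed
    also have "\<dots> = 2 ^ ?k * card (F ux)" by (simp add: card_pts)
    finally have "card ?J = 2 ^ ?k * card (F ux)" .
    then have "real (card (F ux)) = real (card ?J) / 2 ^ ?k" by simp
    then show ?thesis unfolding Fux by simp
  qed
qed



lemma err_sum: "(\<Sum>f\<in>RM m r. \<Sum>z\<in>Z. err_term m r eps f z) = (\<Sum>z\<in>Z. noise_w m eps z * Phi m r eps z)"
proof -
  have "(\<Sum>f\<in>RM m r. \<Sum>z\<in>Z. err_term m r eps f z) = (\<Sum>z\<in>Z. \<Sum>f\<in>RM m r. err_term m r eps f z)"
    by (rule sum.swap)
  also have "\<dots> = (\<Sum>z\<in>Z. noise_w m eps z * Phi m r eps z)"
    unfolding Phi_def err_term_def by (simp add: sum_distrib_left sum_divide_distrib)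
  finally show ?thesis .
qed

definition emb :: "nat \<Rightarrow> nat \<Rightarrow> bool list \<Rightarrow> bool list" where
  "emb m mu ys = ys @ replicate (m - mu) False"

definition vv :: "nat \<Rightarrow> nat \<Rightarrow> (bool list \<Rightarrow> bool) \<Rightarrow> bool list \<Rightarrow> bool" where
  "vv m mu z' = (\<lambda>x. x \<in> Wset m mu \<and> z' (take mu x))"

lemma emb_W: "mu \<le> m \<Longrightarrow> ys \<in> pts mu \<Longrightarrow> emb m mu ys \<in> Wset m mu"
  by (auto simp: emb_def Wset_def pts_def nth_append)

lemma take_emb: "ys \<in> pts mu \<Longrightarrow> take mu (emb m mu ys) = ys"
  by (simp add: emb_def pts_def)

lemma W_take: 
  assumes "mu \<le> m" "x \<in> Wset m mu"
  shows "take mu x \<in> pts mu" "emb m mu (take mu x) = x"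
proof -
  have lx: "length x = m" using assms(2) by (simp add: Wset_def pts_def)
  show "take mu x \<in> pts mu" using lx assms(1) by (simp add: pts_def)
  show "emb m mu (take mu x) = x"
  proof (rule nth_equalityI)
    show "length (emb m mu (take mu x)) = length x" using lx assms(1) by (simp add: emb_def)
  next
    fix p assume "p < length (emb m mu (take mu x))"
    then have p: "p < m" using lx assms(1) by (simp add: emb_def)
    show "emb m mu (take mu x) ! p = x ! p"
    proof (cases "p < mu")
      case True then show ?thesis using lx assms(1) by (simp add: emb_def nth_append)
    next
      case False then show ?thesis using lx assms p by (simp add: emb_def nth_append Wset_def)
    qed
  qed
qed

lemma ext_eq:
  assumes "mu \<le> m"
  shows "{z\<in>words m. restricts mu m z z'} = {z\<in>wd (pts m). \<forall>x\<in>Wset m mu. z x = vv m mu z' x}"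
proof -
  have "restricts mu m z z' \<longleftrightarrow> (\<forall>x\<in>Wset m mu. z x = vv m mu z' x)" for z
  proof
    assume h: "restricts mu m z z'"
    show "\<forall>x\<in>Wset m mu. z x = vv m mu z' x"
    proof
      fix x assume x: "x \<in> Wset m mu"
      have "z (emb m mu (take mu x)) = z' (take mu x)"
        using h W_take(1)[OF assms x] by (simp add: restricts_def emb_def)
      then show "z x = vv m mu z' x" using W_take(2)[OF assms x] x by (simp add: vv_def)
    qed
  next
    assume h: "\<forall>x\<in>Wset m mu. z x = vv m mu z' x"
    show "restricts mu m z z'" unfolding restricts_def
    proof
      fix ys assume ys: "ys \<in> pts mu"
      have "z (emb m mu ys) = vv m mu z' (emb m mu ys)" using h emb_W[OF assms ys] by blast
      then show "z (ys @ replicate (m - mu) False) = z' ys"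
        using emb_W[OF assms ys] take_emb[OF ys] by (simp add: vv_def emb_def)
    qed
  qed
  then show ?thesis unfolding words_wd by auto
qed

lemma wt_vv:
  assumes "mu \<le> m"
  shows "wt eps (Wset m mu) (vv m mu z') = noise_w mu eps z'"
proof -
  have "wt eps (Wset m mu) (vv m mu z') = (\<Prod>x\<in>Wset m mu. wb eps (z' (take mu x)))"
    unfolding wt_def vv_def by (rule prod.cong) auto
  also have "\<dots> = (\<Prod>ys\<in>pts mu. wb eps (z' ys))"
  proof (rule prod.reindex_bij_witness[where i="emb m mu" and j="take mu"])
    fix a assume a: "a \<in> Wset m mu"
    show "emb m mu (take mu a) = a" by (rule W_take(2)[OF assms a])
    show "take mu a \<in> pts mu" by (rule W_take(1)[OF assms a])
    show "wb eps (z' (take mu a)) = wb eps (z' (take mu a))" ..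
  next
    fix b assume b: "b \<in> pts mu"
    show "take mu (emb m mu b) = b" by (rule take_emb[OF b])
    show "emb m mu b \<in> Wset m mu" by (rule emb_W[OF assms b])
  qed
  finally show ?thesis by (simp add: noise_w_def wb_def)
qed

lemma W_sub: "Wset m mu \<subseteq> pts m" by (auto simp: Wset_def)

lemma finite_W: "finite (Wset m mu)" using W_sub finite_pts finite_subset by blast

lemma Pe_cond_eq:
  assumes "mu \<le> m"
  shows "Pe_cond mu m r eps z' = CE eps (pts m) (Wset m mu) (Phi m r eps) (vv m mu z') / wt eps (Wset m mu) (vv m mu z')"
proof -
  have num: "(\<Sum>f\<in>RM m r. \<Sum>z\<in>{z\<in>words m. restricts mu m z z'}. err_term m r eps f z) = CE eps (pts m) (Wset m mu) (Phi m r eps) (vv m mu z')"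
    unfolding err_sum ext_eq[OF assms] CE_def noise_wt ..
  have "(\<Sum>z\<in>{z\<in>words m. restricts mu m z z'}. noise_w m eps z) = CE eps (pts m) (Wset m mu) (\<lambda>_. 1) (vv m mu z')"
    unfolding ext_eq[OF assms] CE_def noise_wt by simp
  also have "\<dots> = wt eps (Wset m mu) (vv m mu z')" by (rule CE_one[OF finite_pts W_sub])
  finally have den: "(\<Sum>z\<in>{z\<in>words m. restricts mu m z z'}. noise_w m eps z) = wt eps (Wset m mu) (vv m mu z')" .
  show ?thesis unfolding Pe_cond_def num den ..
qed

lemma var_identity:
  assumes "mu \<le> m" "0 < eps" "eps < 1"
  shows "(\<Sum>z'\<in>words mu. noise_w mu eps z' * (Pe_cond mu m r eps z' - Pe m r eps)^2)
     = Q eps (pts m) (Wset m mu) (Phi m r eps) - (Pe m r eps)^2"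
proof -
  let ?X = "pts m" and ?W = "Wset m mu" and ?P = "Phi m r eps" and ?E = "Pe m r eps"
  let ?G = "\<lambda>v. wt eps ?W v * (CE eps ?X ?W ?P v / wt eps ?W v - ?E)^2"
  have E: "?E = (\<Sum>z\<in>wd ?X. wt eps ?X z * ?P z)" unfolding Pe_Phi words_wd noise_wt ..
  have "(\<Sum>z'\<in>words mu. noise_w mu eps z' * (Pe_cond mu m r eps z' - ?E)^2) = (\<Sum>v\<in>wd ?W. ?G v)"
  proof (rule sum.reindex_bij_witness[where j="vv m mu" and i="\<lambda>v ys. ys \<in> pts mu \<and> v (emb m mu ys)"])
    fix a assume a: "a \<in> words mu"
    show "(\<lambda>ys. ys \<in> pts mu \<and> vv m mu a (emb m mu ys)) = a"
    proof
      fix ys show "(ys \<in> pts mu \<and> vv m mu a (emb m mu ys)) = a ys"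
      proof (cases "ys \<in> pts mu")
        case True then show ?thesis using emb_W[OF assms(1) True] take_emb[OF True] by (simp add: vv_def)
      next
        case False then show ?thesis using a by (simp add: words_def)
      qed
    qed
    show "vv m mu a \<in> wd ?W" by (simp add: vv_def wd_def)
    show "?G (vv m mu a) = noise_w mu eps a * (Pe_cond mu m r eps a - ?E)^2"
      unfolding Pe_cond_eq[OF assms(1)] wt_vv[OF assms(1)] ..
  next
    fix b assume b: "b \<in> wd ?W"
    show "vv m mu (\<lambda>ys. ys \<in> pts mu \<and> b (emb m mu ys)) = b"
    proof
      fix x show "vv m mu (\<lambda>ys. ys \<in> pts mu \<and> b (emb m mu ys)) x = b x"
      proof (cases "x \<in> ?W")
        case True then show ?thesis using W_take[OF assms(1) True] by (simp add: vv_def)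
      next
        case False then show ?thesis using b by (simp add: vv_def wd_def)
      qed
    qed
    show "(\<lambda>ys. ys \<in> pts mu \<and> b (emb m mu ys)) \<in> words mu" by (simp add: words_def)
  qed
  also have "\<dots> = (\<Sum>v\<in>wd ?W. (CE eps ?X ?W ?P v)^2 / wt eps ?W v - 2 * ?E * CE eps ?X ?W ?P v + ?E^2 * wt eps ?W v)"
  proof (rule sum.cong[OF refl])
    fix v
    have "wt eps ?W v > 0" using wt_pos assms(2,3) by blast
    then show "?G v = (CE eps ?X ?W ?P v)^2 / wt eps ?W v - 2 * ?E * CE eps ?X ?W ?P v + ?E^2 * wt eps ?W v"
      by (simp add: power2_eq_square field_simps)
  qed
  also have "\<dots> = Q eps ?X ?W ?P - 2 * ?E * (\<Sum>v\<in>wd ?W. CE eps ?X ?W ?P v) + ?E^2 * (\<Sum>v\<in>wd ?W. wt eps ?W v)"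
    unfolding Q_def by (simp add: sum.distrib sum_subtractf sum_distrib_left)
  also have "(\<Sum>v\<in>wd ?W. CE eps ?X ?W ?P v) = ?E"
    unfolding E by (rule sum_CE[OF finite_pts W_sub])
  also have "(\<Sum>v\<in>wd ?W. wt eps ?W v) = 1" by (rule sum_wt[OF finite_W])
  finally show ?thesis by (simp add: power2_eq_square)
qed

lemma Af_image_pts:
  assumes "mu \<le> m"
  shows "Af m mu M ` pts m = pts m"
proof
  show "Af m mu M ` pts m \<subseteq> pts m" using Af_pts by blast
  show "pts m \<subseteq> Af m mu M ` pts m"
  proof
    fix x assume x: "x \<in> pts m"
    have "x = Af m mu M (Af m mu M x)" using Af_invol[OF assms] by simp
    moreover have "Af m mu M x \<in> pts m" using x Af_pts by blast
    ultimately show "x \<in> Af m mu M ` pts m" by blast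
  qed
qed

lemma var_bound:
  assumes "mu \<le> m" "0 < eps" "eps < 1"
  shows "Q eps (pts m) (Wset m mu) (Phi m r eps) - (Pe m r eps)^2 \<le> 1 / (4 * 2 ^ (m - mu))"
proof -
  let ?X = "pts m" and ?W = "Wset m mu" and ?P = "Phi m r eps" and ?E = "Pe m r eps"
  let ?k = "m - mu"
  let ?J = "Mset mu ?k"
  let ?c = "real (card ?J) / 2 ^ ?k"
  have E: "?E = (\<Sum>z\<in>wd ?X. wt eps ?X z * ?P z)" unfolding Pe_Phi words_wd noise_wt ..
  have Q0: "Q eps ?X {} ?P = ?E^2" unfolding Q_empty E ..
  have QX: "Q eps ?X ?X ?P = (\<Sum>z\<in>wd ?X. wt eps ?X z * (?P z)^2)" by (rule Q_X[OF assms(2,3)])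
  have "(\<Sum>z\<in>wd ?X. wt eps ?X z * (?P z)^2) \<le> (\<Sum>z\<in>wd ?X. wt eps ?X z * ?P z)"
  proof (rule sum_mono)
    fix z
    have "(?P z)^2 \<le> ?P z" unfolding power2_eq_square using mult_left_le[OF Phi_range(2) Phi_range(1)] .
    moreover have "wt eps ?X z \<ge> 0" using wt_pos[OF assms(2,3)] less_imp_le by blast
    ultimately show "wt eps ?X z * (?P z)^2 \<le> wt eps ?X z * ?P z" by (rule mult_left_mono)
  qed
  moreover have "?E - ?E^2 = 1/4 - (?E - 1/2)^2" by (simp add: power2_eq_square algebra_simps)
  moreover have "(?E - 1/2)^2 \<ge> 0" by simp
  ultimately have D14: "Q eps ?X ?X ?P - Q eps ?X {} ?P \<le> 1/4"
    unfolding QX Q0 E[symmetric] by linarith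
  have inv: "Q eps ?X (Af m mu M ` ?W) ?P = Q eps ?X ?W ?P" for M
  proof (rule Q_inv)
    show "\<forall>x. Af m mu M (Af m mu M x) = x" using Af_invol[OF assms(1)] by simp
    show "Af m mu M ` ?X = ?X" by (rule Af_image_pts[OF assms(1)])
    show "\<forall>z. ?P (z \<circ> Af m mu M) = ?P z" using Phi_Af[OF assms(1)] by simp
  qed
  have c0: "?c \<ge> 0" by simp
  have fam: "(\<Sum>M\<in>?J. Q eps ?X (Af m mu M ` ?W) ?P - Q eps ?X {} ?P) \<le> ?c * (Q eps ?X ?X ?P - Q eps ?X {} ?P)"
  proof (rule Q_family[OF finite_pts finite_Mset _ assms(2,3) c0])
    show "\<forall>M\<in>?J. Af m mu M ` ?W \<subseteq> ?X" using W_sub Af_pts by blast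
    show "\<forall>x\<in>?X. real (card {M \<in> ?J. x \<in> Af m mu M ` ?W}) \<le> ?c \<or> (\<forall>z. ?P (z(x := True)) = ?P (z(x := False)))"
    proof
      fix x assume x: "x \<in> ?X"
      show "real (card {M \<in> ?J. x \<in> Af m mu M ` ?W}) \<le> ?c \<or> (\<forall>z. ?P (z(x := True)) = ?P (z(x := False)))"
      proof (cases "x = zero_pt m")
        case True then show ?thesis using Phi_indep by blast
      next
        case False then show ?thesis using count_bound[OF assms(1) x False] by blast
      qed
    qed
  qed
  then have "real (card ?J) * (Q eps ?X ?W ?P - Q eps ?X {} ?P) \<le> real (card ?J) * ((Q eps ?X ?X ?P - Q eps ?X {} ?P) / 2 ^ ?k)"
    unfolding inv by simp
  moreover have "real (card ?J) > 0" using card_Mset_pos[of mu ?k] by simp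
  ultimately have "Q eps ?X ?W ?P - Q eps ?X {} ?P \<le> (Q eps ?X ?X ?P - Q eps ?X {} ?P) / 2 ^ ?k"
    by (rule mult_left_le_imp_le)
  also have "\<dots> \<le> (1/4) / 2 ^ ?k" by (rule divide_right_mono[OF D14]) simp
  finally show ?thesis unfolding Q0 by simp
qed

theorem lemma3:
  fixes mu m r :: nat and eps :: real
  assumes "mu < m" and "0 < eps" and "eps < 1/2"
  shows "(\<Sum>z'\<in>words mu. noise_w mu eps z' *
            (if Pe_cond mu m r eps z' \<ge> Pe m r eps / 2 + 1/4 then 1 else 0))
           * (1/2 - Pe m r eps)^2
         \<le> (2::real) powr (2 - real (m - mu))"
proof -
  let ?E = "Pe m r eps" and ?k = "m - mu"
  have mum: "mu \<le> m" using assms(1) by simp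
  have e1: "eps < 1" using assms(3) by simp
  have Ehalf: "?E \<le> 1/2" by (rule Pe_le_half[OF assms(2) e1])
  have "(\<Sum>z'\<in>words mu. noise_w mu eps z' * (if Pe_cond mu m r eps z' \<ge> ?E / 2 + 1/4 then 1 else 0)) * (1/2 - ?E)^2
      = (\<Sum>z'\<in>words mu. noise_w mu eps z' * ((if Pe_cond mu m r eps z' \<ge> ?E / 2 + 1/4 then 1 else 0) * (1/2 - ?E)^2))"
    by (simp add: sum_distrib_right mult.assoc)
  also have "\<dots> \<le> (\<Sum>z'\<in>words mu. noise_w mu eps z' * (4 * (Pe_cond mu m r eps z' - ?E)^2))"
  proof (rule sum_mono)
    fix z'
    have nn: "noise_w mu eps z' \<ge> 0" unfolding noise_wt using wt_pos[OF assms(2) e1] less_imp_le by blast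
    have "(if Pe_cond mu m r eps z' \<ge> ?E / 2 + 1/4 then 1 else 0) * (1/2 - ?E)^2 \<le> 4 * (Pe_cond mu m r eps z' - ?E)^2"
    proof (cases "Pe_cond mu m r eps z' \<ge> ?E / 2 + 1/4")
      case True
      then have "Pe_cond mu m r eps z' - ?E \<ge> (1/2 - ?E) / 2" by simp
      moreover have "(1/2 - ?E) / 2 \<ge> 0" using Ehalf by simp
      ultimately have "((1/2 - ?E) / 2)^2 \<le> (Pe_cond mu m r eps z' - ?E)^2"
        by (rule power_mono)
      then show ?thesis using True by (simp add: power2_eq_square field_simps)
    next
      case False then show ?thesis by simp
    qed
    then show "noise_w mu eps z' * ((if Pe_cond mu m r eps z' \<ge> ?E / 2 + 1/4 then 1 else 0) * (1/2 - ?E)^2)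
      \<le> noise_w mu eps z' * (4 * (Pe_cond mu m r eps z' - ?E)^2)" using nn by (rule mult_left_mono)
  qed
  also have "\<dots> = 4 * (\<Sum>z'\<in>words mu. noise_w mu eps z' * (Pe_cond mu m r eps z' - ?E)^2)"
    by (simp add: sum_distrib_left algebra_simps)
  also have "\<dots> = 4 * (Q eps (pts m) (Wset m mu) (Phi m r eps) - ?E^2)"
    unfolding var_identity[OF mum assms(2) e1] ..
  also have "\<dots> \<le> 4 * (1 / (4 * 2 ^ ?k))"
    using var_bound[OF mum assms(2) e1, of r] by simp
  also have "\<dots> = 1 / 2 ^ ?k" by simp
  also have "\<dots> \<le> (2::real) powr (2 - real ?k)"
  proof -
    have "(2::real) powr (2 - real ?k) = 2 powr 2 / 2 powr (real ?k)" by (rule powr_diff)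
    also have "\<dots> = 4 / 2 ^ ?k" by (simp add: powr_realpow)
    finally show ?thesis by (simp add: divide_right_mono)
  qed
  finally show ?thesis .
qed


end
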